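(* Let $t(x_1,\dots,x_n)$ be any Łukasiewicz $\mu$-term. For every input vector $\vec r=(r_1,\dots,r_n)\in[0,1]^n$, the evaluation algorithm described in the context terminates with a conditioned linear expression $C_{\vec r}\vdash e_{\vec r}$ in variables $x_1,\dots,x_n$ satisfying (P1) $C_{\vec r}(\vec r)$ is true, and (P2) for all $\vec s\in\mathbb R^n$, if $C_{\vec r}(\vec s)$ is true then $\vec s\in[0,1]^n$ and $e_{\vec r}(\vec s)=t(\vec s)$. Moreover, the set $\{C_{\vec r}\vdash e_{\vec r}\mid\vec r\in[0,1]^n\}$ of possible results is finite, and hence is a system of conditioned linear expressions representing the function $t:[0,1]^n\to[0,1]$.
   Context: Łukasiewicz $\mu$-terms: $t::=x\mid\underline0\mid\underline1\mid r\,t\mid t\sqcup t\mid t\sqcap t\mid t\oplus t\mid t\odot t\mid\mu x.t\mid\nu x.t$, with $r\in[0,1]$ real; $\mu,\nu$ bind. $t(x_1,\dots,x_n)$ means free variables are among $x_1,\dots,x_n$. Value at $\vec r\in[0,1]^n$: $x_i\mapsto r_i$, $\underline0\mapsto0$, $\underline1\mapsto1$, $r\,t\mapsto r\cdot t(\vec r)$, $\sqcup,\sqcap$ max/min, $t_1\oplus t_2\mapsto\min(t_1(\vec r)+t_2(\vec r),1)$, $t_1\odot t_2\mapsto\max(t_1(\vec r)+t_2(\vec r)-1,0)$, $(\mu y.t)(\vec r)$ and $(\nu y.t)(\vec r)$ the least and greatest fixed points of the monotone map $r'\mapsto t(\vec r,r')$ on $[0,1]$. A linear expression in $x_1,\dots,x_n$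 is $q_1x_1+\dots+q_nx_n+q$ ($q_i,q$ real). A conditioned linear expression $C\vdash e$ consists of a linear expression $e$ and a finite set $C$ of inequalities $e_1<e_2$ or $e_1\le e_2$ between linear expressions; $C(\vec r)$ is the conjunction of its instances. A finite set $\mathcal F$ of conditioned linear expressions represents $f:[0,1]^n\to[0,1]$ if for every $\vec r\in[0,1]^n$ some $(C\vdash e)\in\mathcal F$ has $C(\vec r)$ true, and whenever $(C\vdash e)\in\mathcal F$ and $C(\vec r)$ is true ($\vec r\in[0,1]^n$), $e(\vec r)=f(\vec r)$. For an expression/constraint in $x_1,\dots,x_{n+1}$, $C(x_1,\dots,x_n,d)$ denotes substitution of a linear expression $d(x_1,\dots,x_n)$ for $x_{n+1}$. The algorithm (real-number model of computation) on input $t(x_1,\dots,x_n)$ and $\vec r$ returns $C\vdash e$, recursively on $t$. Atoms: return the range constraints $\{0\le x_k\le1\}_k$ with $e$ equal to $x_i$, $0$ or $1$. For compound non-fixed-point terms, recursively obtain $C_i\vdash e_i$ for the subterms and return the union of the $C_i$ together with the constraint selecting the linear piece of the connective valid at $\vec r$; e.g. for $t_1\oplus t_2$: if $e_1(\vec r)+e_2(\vec r)\le1$ return $C_1,C_2,e_1+e_2\le1\vdash e_1+e_2$, otherwise $C_1,C_2,e_1+e_2\ge1\vdash 1$ (analogously for $\sqcup,\sqcap,\odot$; for $r\,t_1$ return $C_1\vdash r e_1$). For $\mu x_{n+1}.t'$: start with $D=\emptyset$, $d=0$. Loop: recursively compute $t'$ at $(\vec r,d(\vec r))$ as $C\vdash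 e$ with $e=q_1x_1+\dots+q_nx_n+q_{n+1}x_{n+1}+q$. If $q_{n+1}\ne1$, let $f=\frac1{1-q_{n+1}}(q_1x_1+\dots+q_nx_n+q)$; if $C(\vec r,f(\vec r))$ holds, return $D\cup C(\vec x,d(\vec x))\cup C(\vec x,f(\vec x))\vdash f$; otherwise let $N$ be the negation of $e_1(\vec x,f(\vec x))\vartriangleleft e_2(\vec x,f(\vec x))$ for a chosen inequality $e_1\vartriangleleft e_2$ of $C$ false at $(\vec r,f(\vec r))$, and go to the next-approximation step. If $q_{n+1}=1$: if $q_1r_1+\dots+q_nr_n+q=0$ return $D\cup C(\vec x,d(\vec x))\cup\{q_1x_1+\dots+q_nx_n+q=0\}\vdash d$; otherwise let $N$ be whichever of $q_1x_1+\dots+q_nx_n+q<0$, $0<q_1x_1+\dots+q_nx_n+q$ holds at $\vec r$, and go to the next-approximation step. Next approximation: write $C$ as $C'\cup\{x_{n+1}>a_i\}\cup\{x_{n+1}\ge a_i\}\cup\{x_{n+1}\le b_i\}_{1\le i\le m'}\cup\{x_{n+1}<b_i\}_{m'<i\le m}$ with $C',a_i,b_i$ not involving $x_{n+1}$; choose $j$ with $b_j(\vec r)\le b_i(\vec r)$ for all $i\le m$; replace $D$ by $D\cup C(\vec x,d(\vec x))\cup\{N\}\cup\{b_j\le b_i\mid1\le i\le m\}$ and $d$ by $e(\vec x,b_j(\vec x))$, and repeat the loop. For $\nu x_{n+1}.t'$ the algorithm is the order-dual (start from $d=1$, use the lower bounds $a_i$, choosing $a_j$ maximal at $\vec r$).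 *)

theory Defs
  imports Complex_Main
begin

text \<open>Variables are indexed from 0: Var i stands for x_(i+1). A term t(x_1,...,x_n)
is a term well-formed at level n. The binders Mu/Nu at level n bind the variable
with index n (i.e. x_(n+1)), so the body of a binder lives at level n+1.\<close>

datatype mterm =
    Var nat | Zero | One | Scal real mterm
  | Join mterm mterm | Meet mterm mterm
  | Oplus mterm mterm | Odot mterm mterm
  | Mu mterm | Nu mterm

fun wf_term :: "nat \<Rightarrow> mterm \<Rightarrow> bool" where
  "wf_term n (Var i) = (i < n)"
| "wf_term n Zero = True"
| "wf_term n One = True"
| "wf_term n (Scal c t) = (0 \<le> c \<and> c \<le> 1 \<and> wf_term n t)"
| "wf_term n (Join t1 t2) = (wf_term n t1 \<and> wf_term n t2)"
| "wf_term n (Meet t1 t2) = (wf_term n t1 \<and> wf_term n t2)"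
| "wf_term n (Oplus t1 t2) = (wf_term n t1 \<and> wf_term n t2)"
| "wf_term n (Odot t1 t2) = (wf_term n t1 \<and> wf_term n t2)"
| "wf_term n (Mu t) = wf_term (Suc n) t"
| "wf_term n (Nu t) = wf_term (Suc n) t"

fun sem :: "mterm \<Rightarrow> real list \<Rightarrow> real" where
  "sem (Var i) rs = rs ! i"
| "sem Zero rs = 0"
| "sem One rs = 1"
| "sem (Scal c t) rs = c * sem t rs"
| "sem (Join t1 t2) rs = max (sem t1 rs) (sem t2 rs)"
| "sem (Meet t1 t2) rs = min (sem t1 rs) (sem t2 rs)"
| "sem (Oplus t1 t2) rs = min (sem t1 rs + sem t2 rs) 1"
| "sem (Odot t1 t2) rs = max (sem t1 rs + sem t2 rs - 1) 0"
| "sem (Mu t) rs = (LEAST y. 0 \<le> y \<and> y \<le> 1 \<and> sem t (rs @ [y]) = y)"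
| "sem (Nu t) rs = (GREATEST y. 0 \<le> y \<and> y \<le> 1 \<and> sem t (rs @ [y]) = y)"

definition cube :: "nat \<Rightarrow> real list set" where
  "cube n = {r. length r = n \<and> set r \<subseteq> {0..1}}"

text \<open>A linear expression: coefficient function (coefficient of x_(i+1) at index i) and constant.\<close>
type_synonym lin = "(nat \<Rightarrow> real) \<times> real"

definition lev :: "lin \<Rightarrow> real list \<Rightarrow> real" where
  "lev e s = (\<Sum>i<length s. fst e i * s ! i) + snd e"

definition lconst :: "real \<Rightarrow> lin" where "lconst c = ((\<lambda>_. 0), c)"
definition lvar :: "nat \<Rightarrow> lin" where "lvar i = ((\<lambda>_. 0)(i := 1), 0)"
definition ladd :: "lin \<Rightarrow> lin \<Rightarrow> lin" where
  "ladd e1 e2 = ((\<lambda>i. fst e1 i + fst e2 i), snd e1 + snd e2)"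
definition lsub :: "lin \<Rightarrow> lin \<Rightarrow> lin" where
  "lsub e1 e2 = ((\<lambda>i. fst e1 i - fst e2 i), snd e1 - snd e2)"
definition lscale :: "real \<Rightarrow> lin \<Rightarrow> lin" where
  "lscale c e = ((\<lambda>i. c * fst e i), c * snd e)"

definition subst :: "nat \<Rightarrow> lin \<Rightarrow> lin \<Rightarrow> lin" where
  "subst n d e = ((\<lambda>i. if i = n then 0 else fst e i + fst e n * fst d i), snd e + fst e n * snd d)"

datatype cstr = Lt lin lin | Le lin lin

fun holds :: "real list \<Rightarrow> cstr \<Rightarrow> bool" where
  "holds s (Lt a b) = (lev a s < lev b s)"
| "holds s (Le a b) = (lev a s \<le> lev b s)"

definition holdsC :: "real list \<Rightarrow> cstr set \<Rightarrow> bool" where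
  "holdsC s C = (\<forall>c\<in>C. holds s c)"

fun substc :: "nat \<Rightarrow> lin \<Rightarrow> cstr \<Rightarrow> cstr" where
  "substc n d (Lt a b) = Lt (subst n d a) (subst n d b)"
| "substc n d (Le a b) = Le (subst n d a) (subst n d b)"

definition substC :: "nat \<Rightarrow> lin \<Rightarrow> cstr set \<Rightarrow> cstr set" where
  "substC n d C = substc n d ` C"

fun neg :: "cstr \<Rightarrow> cstr" where
  "neg (Lt a b) = Le b a"
| "neg (Le a b) = Lt b a"

fun cdiff :: "cstr \<Rightarrow> lin" where
  "cdiff (Lt a b) = lsub a b"
| "cdiff (Le a b) = lsub a b"

text \<open>A constraint e1 <| e2 whose difference e1 - e2 = a*x_(n+1) + g has a \<noteq> 0 is equivalent to
x_(n+1) <| -g/a (upper bound, a > 0) or x_(n+1) |> -g/a (lower bound, a < 0).\<close>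
definition bnd :: "nat \<Rightarrow> cstr \<Rightarrow> lin" where
  "bnd n c = lscale (- 1 / fst (cdiff c) n) ((fst (cdiff c))(n := 0), snd (cdiff c))"

definition upper :: "nat \<Rightarrow> cstr set \<Rightarrow> lin set" where
  "upper n C = {bnd n c | c. c \<in> C \<and> fst (cdiff c) n > 0}"

definition lower :: "nat \<Rightarrow> cstr set \<Rightarrow> lin set" where
  "lower n C = {bnd n c | c. c \<in> C \<and> fst (cdiff c) n < 0}"

definition range_c :: "nat \<Rightarrow> cstr set" where
  "range_c n = {Le (lconst 0) (lvar k) | k. k < n} \<union> {Le (lvar k) (lconst 1) | k. k < n}"

text \<open>Nondeterminism is modelled by returning the set of all outcomes of all runs;
a fuel parameter bounds the number of steps, None marks a run that ran out of fuel.\<close>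

definition obind :: "'a option set \<Rightarrow> ('a \<Rightarrow> 'b option set) \<Rightarrow> 'b option set" where
  "obind A f = (\<Union>x\<in>A. case x of None \<Rightarrow> {None} | Some a \<Rightarrow> f a)"

text \<open>One fixed-point check of the loop: Inl = return value, Inr N = continue with constraint N.\<close>
definition fp_check :: "nat \<Rightarrow> real list \<Rightarrow> cstr set \<Rightarrow> lin \<Rightarrow> cstr set \<Rightarrow> lin
    \<Rightarrow> ((cstr set \<times> lin) + cstr) set" where
  "fp_check n r D d C e =
    (let qn = fst e n; g = ((fst e)(n := 0), snd e) in
     if qn \<noteq> 1 then
       (let f = lscale (1 / (1 - qn)) g in
        if holdsC (r @ [lev f r]) C
        then {Inl (D \<union> substC n d C \<union> substC n f C, f)}
        else {Inr (neg (substc n f c)) | c. c \<in> C \<and> \<not> holds (r @ [lev f r]) c})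
     else if lev g r = 0
       then {Inl (D \<union> substC n d C \<union> {Le g (lconst 0), Le (lconst 0) g}, d)}
       else {Inr (if lev g r < 0 then Lt g (lconst 0) else Lt (lconst 0) g)})"

fun alg :: "nat \<Rightarrow> nat \<Rightarrow> mterm \<Rightarrow> real list \<Rightarrow> (cstr set \<times> lin) option set"
and loop_mu :: "nat \<Rightarrow> nat \<Rightarrow> mterm \<Rightarrow> real list \<Rightarrow> cstr set \<Rightarrow> lin \<Rightarrow> (cstr set \<times> lin) option set"
and loop_nu :: "nat \<Rightarrow> nat \<Rightarrow> mterm \<Rightarrow> real list \<Rightarrow> cstr set \<Rightarrow> lin \<Rightarrow> (cstr set \<times> lin) option set"
where
  "alg 0 n t r = {None}"
| "alg (Suc k) n (Var i) r = {Some (range_c n, lvar i)}"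
| "alg (Suc k) n Zero r = {Some (range_c n, lconst 0)}"
| "alg (Suc k) n One r = {Some (range_c n, lconst 1)}"
| "alg (Suc k) n (Scal c t) r = obind (alg k n t r) (\<lambda>(C, e). {Some (C, lscale c e)})"
| "alg (Suc k) n (Join t1 t2) r = obind (alg k n t1 r) (\<lambda>(C1, e1). obind (alg k n t2 r) (\<lambda>(C2, e2).
     if lev e1 r \<le> lev e2 r then {Some (C1 \<union> C2 \<union> {Le e1 e2}, e2)}
     else {Some (C1 \<union> C2 \<union> {Le e2 e1}, e1)}))"
| "alg (Suc k) n (Meet t1 t2) r = obind (alg k n t1 r) (\<lambda>(C1, e1). obind (alg k n t2 r) (\<lambda>(C2, e2).
     if lev e1 r \<le> lev e2 r then {Some (C1 \<union> C2 \<union> {Le e1 e2}, e1)}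
     else {Some (C1 \<union> C2 \<union> {Le e2 e1}, e2)}))"
| "alg (Suc k) n (Oplus t1 t2) r = obind (alg k n t1 r) (\<lambda>(C1, e1). obind (alg k n t2 r) (\<lambda>(C2, e2).
     if lev (ladd e1 e2) r \<le> 1 then {Some (C1 \<union> C2 \<union> {Le (ladd e1 e2) (lconst 1)}, ladd e1 e2)}
     else {Some (C1 \<union> C2 \<union> {Le (lconst 1) (ladd e1 e2)}, lconst 1)}))"
| "alg (Suc k) n (Odot t1 t2) r = obind (alg k n t1 r) (\<lambda>(C1, e1). obind (alg k n t2 r) (\<lambda>(C2, e2).
     if lev (ladd e1 e2) r \<le> 1 then {Some (C1 \<union> C2 \<union> {Le (ladd e1 e2) (lconst 1)}, lconst 0)}
     else {Some (C1 \<union> C2 \<union> {Le (lconst 1) (ladd e1 e2)}, lsub (ladd e1 e2) (lconst 1))}))"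
| "alg (Suc k) n (Mu t) r = loop_mu k n t r {} (lconst 0)"
| "alg (Suc k) n (Nu t) r = loop_nu k n t r {} (lconst 1)"
| "loop_mu 0 n t r D d = {None}"
| "loop_mu (Suc k) n t r D d = obind (alg k (Suc n) t (r @ [lev d r])) (\<lambda>(C, e).
     \<Union>x\<in>fp_check n r D d C e. (case x of
        Inl res \<Rightarrow> {Some res}
      | Inr N \<Rightarrow> (\<Union>b\<in>{b \<in> upper n C. \<forall>b'\<in>upper n C. lev b r \<le> lev b' r}.
           loop_mu k n t r (D \<union> substC n d C \<union> {N} \<union> {Le b b' | b'. b' \<in> upper n C})
             (subst n b e))))"
| "loop_nu 0 n t r D d = {None}"
| "loop_nu (Suc k) n t r D d = obind (alg k (Suc n) t (r @ [lev d r])) (\<lambda>(C, e).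
     \<Union>x\<in>fp_check n r D d C e. (case x of
        Inl res \<Rightarrow> {Some res}
      | Inr N \<Rightarrow> (\<Union>a\<in>{a \<in> lower n C. \<forall>a'\<in>lower n C. lev a' r \<le> lev a r}.
           loop_nu k n t r (D \<union> substC n d C \<union> {N} \<union> {Le a' a | a'. a' \<in> lower n C})
             (subst n a e))))"

definition results :: "nat \<Rightarrow> mterm \<Rightarrow> (cstr set \<times> lin) set" where
  "results n t = {res. \<exists>r k. r \<in> cube n \<and> Some res \<in> alg k n t r}"

definition represents :: "nat \<Rightarrow> (cstr set \<times> lin) set \<Rightarrow> (real list \<Rightarrow> real) \<Rightarrow> bool" where
  "represents n F f \<longleftrightarrow>
     (\<forall>r\<in>cube n. \<exists>(C, e)\<in>F. holdsC r C) \<and>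
     (\<forall>(C, e)\<in>F. \<forall>r\<in>cube n. holdsC r C \<longrightarrow> lev e r = f r)"

end

theory Submission
  imports Defs
begin

lemma lev_snoc: "lev e (s @ [y]) = fst e (length s) * y + lev ((fst e)(length s := 0), snd e) s"
  by (simp add: lev_def nth_append)

lemma lev_subst: "length s = n \<Longrightarrow> lev (subst n d e) s = lev e (s @ [lev d s])"
  apply (subst lev_snoc)
  by (simp add: lev_def subst_def sum.distrib sum_distrib_left algebra_simps)

lemma holds_substc: "length s = n \<Longrightarrow> holds s (substc n d c) = holds (s @ [lev d s]) c"
  by (cases c) (auto simp: lev_subst)

lemma holdsC_substC: "length s = n \<Longrightarrow> holdsC s (substC n d C) = holdsC (s @ [lev d s]) C"
  by (auto simp: holdsC_def substC_def holds_substc)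

lemma lev_lconst[simp]: "lev (lconst c) s = c"
  by (simp add: lev_def lconst_def)
lemma lev_lvar[simp]: "lev (lvar i) s = s ! i" if "i < length s"
proof -
  have "(\<Sum>ia<length s. ((\<lambda>_. 0)(i := 1)) ia * s ! ia) = (\<Sum>ia<length s. if ia = i then s!ia else 0)"
    by (rule sum.cong) auto
  then show ?thesis using that by (simp add: lev_def lvar_def)
qed
lemma lev_ladd[simp]: "lev (ladd a b) s = lev a s + lev b s"
  by (simp add: lev_def ladd_def sum.distrib algebra_simps)
lemma lev_lsub[simp]: "lev (lsub a b) s = lev a s - lev b s"
  by (simp add: lev_def lsub_def sum_subtractf algebra_simps)
lemma lev_lscale[simp]: "lev (lscale c a) s = c * lev a s"
  by (simp add: lev_def lscale_def sum_distrib_left algebra_simps)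

lemma holds_cdiff: "holds s c = (case c of Lt a b \<Rightarrow> lev (cdiff c) s < 0 | Le a b \<Rightarrow> lev (cdiff c) s \<le> 0)"
  by (cases c) auto


lemma lfp_real:
  fixes F :: "real \<Rightarrow> real"
  assumes mono: "\<And>x y. 0\<le>x \<Longrightarrow> x\<le>y \<Longrightarrow> y\<le>1 \<Longrightarrow> F x \<le> F y"
    and rng: "\<And>x. 0\<le>x \<Longrightarrow> x\<le>1 \<Longrightarrow> 0 \<le> F x \<and> F x \<le> 1"
  shows "0 \<le> (LEAST y. 0 \<le> y \<and> y \<le> 1 \<and> F y = y) \<and> (LEAST y. 0 \<le> y \<and> y \<le> 1 \<and> F y = y) \<le> 1
     \<and> F (LEAST y. 0 \<le> y \<and> y \<le> 1 \<and> F y = y) = (LEAST y. 0 \<le> y \<and> y \<le> 1 \<and> F y = y)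
     \<and> (\<forall>y. 0\<le>y \<longrightarrow> y\<le>1 \<longrightarrow> F y \<le> y \<longrightarrow> (LEAST y. 0 \<le> y \<and> y \<le> 1 \<and> F y = y) \<le> y)"
proof -
  define S where "S = {y. 0\<le>y \<and> y\<le>1 \<and> F y \<le> y}"
  define m where "m = Inf S"
  have one: "1 \<in> S" using rng[of 1] by (auto simp: S_def)
  have bdd: "bdd_below S" by (rule bdd_belowI[of _ 0]) (auto simp: S_def)
  have low: "\<And>y. y \<in> S \<Longrightarrow> m \<le> y" unfolding m_def using bdd by (rule cInf_lower[rotated])
  have m0: "0 \<le> m" unfolding m_def
  proof (rule cInf_greatest)
    show "S \<noteq> {}" using one by auto
  qed (auto simp: S_def)
  have m1: "m \<le> 1" using low[OF one] .
  have Fm: "F m \<le> m" unfolding m_def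
  proof (rule cInf_greatest)
    show "S \<noteq> {}" using one by auto
    fix y assume y: "y \<in> S"
    have "F (Inf S) \<le> F y" using mono[of "Inf S" y] m0 low[OF y] y by (auto simp: S_def m_def)
    also have "\<dots> \<le> y" using y by (auto simp: S_def)
    finally show "F (Inf S) \<le> y" .
  qed
  have "F m \<in> S" using rng[OF m0 m1] mono[of "F m" m] Fm m1 by (auto simp: S_def)
  then have "m \<le> F m" by (rule low)
  with Fm have fx: "F m = m" by simp
  have L: "(LEAST y. 0 \<le> y \<and> y \<le> 1 \<and> F y = y) = m"
    by (rule Least_equality) (use m0 m1 fx low in \<open>auto simp: S_def\<close>)
  show ?thesis unfolding L using m0 m1 fx low by (auto simp: S_def)
qed

lemma gfp_real:
  fixes F :: "real \<Rightarrow> real"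
  assumes mono: "\<And>x y. 0\<le>x \<Longrightarrow> x\<le>y \<Longrightarrow> y\<le>1 \<Longrightarrow> F x \<le> F y"
    and rng: "\<And>x. 0\<le>x \<Longrightarrow> x\<le>1 \<Longrightarrow> 0 \<le> F x \<and> F x \<le> 1"
  shows "0 \<le> (GREATEST y. 0 \<le> y \<and> y \<le> 1 \<and> F y = y) \<and> (GREATEST y. 0 \<le> y \<and> y \<le> 1 \<and> F y = y) \<le> 1
     \<and> F (GREATEST y. 0 \<le> y \<and> y \<le> 1 \<and> F y = y) = (GREATEST y. 0 \<le> y \<and> y \<le> 1 \<and> F y = y)
     \<and> (\<forall>y. 0\<le>y \<longrightarrow> y\<le>1 \<longrightarrow> y \<le> F y \<longrightarrow> y \<le> (GREATEST y. 0 \<le> y \<and> y \<le> 1 \<and> F y = y))"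
proof -
  define S where "S = {y. 0\<le>y \<and> y\<le>1 \<and> y \<le> F y}"
  define m where "m = Sup S"
  have zero: "0 \<in> S" using rng[of 0] by (auto simp: S_def)
  have bdd: "bdd_above S" by (rule bdd_aboveI[of _ 1]) (auto simp: S_def)
  have up: "\<And>y. y \<in> S \<Longrightarrow> y \<le> m" unfolding m_def using bdd by (rule cSup_upper[rotated])
  have m1: "m \<le> 1" unfolding m_def
  proof (rule cSup_least)
    show "S \<noteq> {}" using zero by auto
  qed (auto simp: S_def)
  have m0: "0 \<le> m" using up[OF zero] .
  have Fm: "m \<le> F m" unfolding m_def
  proof (rule cSup_least)
    show "S \<noteq> {}" using zero by auto
    fix y assume y: "y \<in> S"
    have "y \<le> F y" using y by (auto simp: S_def)
    also have "F y \<le> F (Sup S)" using mono[of y "Sup S"] m1 up[OF y] y by (auto simp: S_def m_def)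
    finally show "y \<le> F (Sup S)" .
  qed
  have "F m \<in> S" using rng[OF m0 m1] mono[of m "F m"] Fm m0 by (auto simp: S_def)
  then have "F m \<le> m" by (rule up)
  with Fm have fx: "F m = m" by simp
  have L: "(GREATEST y. 0 \<le> y \<and> y \<le> 1 \<and> F y = y) = m"
    by (rule Greatest_equality) (use m0 m1 fx up in \<open>auto simp: S_def\<close>)
  show ?thesis unfolding L using m0 m1 fx up by (auto simp: S_def)
qed

lemma cube_snoc: "s \<in> cube m \<Longrightarrow> 0 \<le> y \<Longrightarrow> y \<le> 1 \<Longrightarrow> s @ [y] \<in> cube (Suc m)"
  by (auto simp: cube_def)

lemma cube_nth: "s \<in> cube m \<Longrightarrow> i < m \<Longrightarrow> 0 \<le> s ! i \<and> s ! i \<le> 1"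
  by (auto simp: cube_def) (metis atLeastAtMost_iff nth_mem subsetD)+

lemma sem_props: "wf_term m t \<Longrightarrow> (\<forall>s\<in>cube m. 0 \<le> sem t s \<and> sem t s \<le> 1) \<and>
   (\<forall>s s'. s\<in>cube m \<longrightarrow> s'\<in>cube m \<longrightarrow> (\<forall>i<m. s!i \<le> s'!i) \<longrightarrow> sem t s \<le> sem t s')"
proof (induction t arbitrary: m)
  case (Var i) then show ?case by (auto dest: cube_nth)
next
  case Zero then show ?case by auto
next
  case One then show ?case by auto
next
  case (Scal c t)
  have c: "0 \<le> c" "c \<le> 1" using Scal.prems by auto
  have I: "(\<forall>s\<in>cube m. 0 \<le> sem t s \<and> sem t s \<le> 1) \<and>
   (\<forall>s s'. s\<in>cube m \<longrightarrow> s'\<in>cube m \<longrightarrow> (\<forall>i<m. s!i \<le> s'!i) \<longrightarrow> sem t s \<le> sem t s')"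
    using Scal by auto
  show ?case
  proof (intro conjI ballI allI impI)
    fix s assume "s \<in> cube m"
    then have "0 \<le> sem t s" "sem t s \<le> 1" using I by auto
    then show "0 \<le> sem (Scal c t) s" "sem (Scal c t) s \<le> 1" using c mult_le_one[of c "sem t s"] by auto
  next
    fix s s' assume "s \<in> cube m" "s' \<in> cube m" "\<forall>i<m. s!i \<le> s'!i"
    then have "sem t s \<le> sem t s'" using I by blast
    then show "sem (Scal c t) s \<le> sem (Scal c t) s'" using c by (simp add: mult_left_mono)
  qed
next
  case (Join t1 t2)
  have I1: "(\<forall>s\<in>cube m. 0 \<le> sem t1 s \<and> sem t1 s \<le> 1) \<and>
   (\<forall>s s'. s\<in>cube m \<longrightarrow> s'\<in>cube m \<longrightarrow> (\<forall>i<m. s!i \<le> s'!i) \<longrightarrow> sem t1 s \<le> sem t1 s')"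
    and I2: "(\<forall>s\<in>cube m. 0 \<le> sem t2 s \<and> sem t2 s \<le> 1) \<and>
   (\<forall>s s'. s\<in>cube m \<longrightarrow> s'\<in>cube m \<longrightarrow> (\<forall>i<m. s!i \<le> s'!i) \<longrightarrow> sem t2 s \<le> sem t2 s')"
    using Join by auto
  show ?case
  proof (intro conjI ballI allI impI)
    fix s assume "s \<in> cube m"
    then have "0 \<le> sem t1 s" "sem t1 s \<le> 1" "0 \<le> sem t2 s" "sem t2 s \<le> 1" using I1 I2 by auto
    then show "0 \<le> sem (Join t1 t2) s" "sem (Join t1 t2) s \<le> 1" by auto
  next
    fix s s' assume "s \<in> cube m" "s' \<in> cube m" "\<forall>i<m. s!i \<le> s'!i"
    then have "sem t1 s \<le> sem t1 s'" "sem t2 s \<le> sem t2 s'" using I1 I2 by blast+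
    then show "sem (Join t1 t2) s \<le> sem (Join t1 t2) s'" by auto
  qed
next
  case (Meet t1 t2)
  have I1: "(\<forall>s\<in>cube m. 0 \<le> sem t1 s \<and> sem t1 s \<le> 1) \<and>
   (\<forall>s s'. s\<in>cube m \<longrightarrow> s'\<in>cube m \<longrightarrow> (\<forall>i<m. s!i \<le> s'!i) \<longrightarrow> sem t1 s \<le> sem t1 s')"
    and I2: "(\<forall>s\<in>cube m. 0 \<le> sem t2 s \<and> sem t2 s \<le> 1) \<and>
   (\<forall>s s'. s\<in>cube m \<longrightarrow> s'\<in>cube m \<longrightarrow> (\<forall>i<m. s!i \<le> s'!i) \<longrightarrow> sem t2 s \<le> sem t2 s')"
    using Meet by auto
  show ?case
  proof (intro conjI ballI allI impI)
    fix s assume "s \<in> cube m"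
    then have "0 \<le> sem t1 s" "sem t1 s \<le> 1" "0 \<le> sem t2 s" "sem t2 s \<le> 1" using I1 I2 by auto
    then show "0 \<le> sem (Meet t1 t2) s" "sem (Meet t1 t2) s \<le> 1" by auto
  next
    fix s s' assume "s \<in> cube m" "s' \<in> cube m" "\<forall>i<m. s!i \<le> s'!i"
    then have "sem t1 s \<le> sem t1 s'" "sem t2 s \<le> sem t2 s'" using I1 I2 by blast+
    then show "sem (Meet t1 t2) s \<le> sem (Meet t1 t2) s'" by auto
  qed
next
  case (Oplus t1 t2)
  have I1: "(\<forall>s\<in>cube m. 0 \<le> sem t1 s \<and> sem t1 s \<le> 1) \<and>
   (\<forall>s s'. s\<in>cube m \<longrightarrow> s'\<in>cube m \<longrightarrow> (\<forall>i<m. s!i \<le> s'!i) \<longrightarrow> sem t1 s \<le> sem t1 s')"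
    and I2: "(\<forall>s\<in>cube m. 0 \<le> sem t2 s \<and> sem t2 s \<le> 1) \<and>
   (\<forall>s s'. s\<in>cube m \<longrightarrow> s'\<in>cube m \<longrightarrow> (\<forall>i<m. s!i \<le> s'!i) \<longrightarrow> sem t2 s \<le> sem t2 s')"
    using Oplus by auto
  show ?case
  proof (intro conjI ballI allI impI)
    fix s assume "s \<in> cube m"
    then have "0 \<le> sem t1 s" "sem t1 s \<le> 1" "0 \<le> sem t2 s" "sem t2 s \<le> 1" using I1 I2 by auto
    then show "0 \<le> sem (Oplus t1 t2) s" "sem (Oplus t1 t2) s \<le> 1" by auto
  next
    fix s s' assume "s \<in> cube m" "s' \<in> cube m" "\<forall>i<m. s!i \<le> s'!i"
    then have "sem t1 s \<le> sem t1 s'" "sem t2 s \<le> sem t2 s'" using I1 I2 by blast+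
    then show "sem (Oplus t1 t2) s \<le> sem (Oplus t1 t2) s'" by auto
  qed
next
  case (Odot t1 t2)
  have I1: "(\<forall>s\<in>cube m. 0 \<le> sem t1 s \<and> sem t1 s \<le> 1) \<and>
   (\<forall>s s'. s\<in>cube m \<longrightarrow> s'\<in>cube m \<longrightarrow> (\<forall>i<m. s!i \<le> s'!i) \<longrightarrow> sem t1 s \<le> sem t1 s')"
    and I2: "(\<forall>s\<in>cube m. 0 \<le> sem t2 s \<and> sem t2 s \<le> 1) \<and>
   (\<forall>s s'. s\<in>cube m \<longrightarrow> s'\<in>cube m \<longrightarrow> (\<forall>i<m. s!i \<le> s'!i) \<longrightarrow> sem t2 s \<le> sem t2 s')"
    using Odot by auto
  show ?case
  proof (intro conjI ballI allI impI)
    fix s assume "s \<in> cube m"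
    then have "0 \<le> sem t1 s" "sem t1 s \<le> 1" "0 \<le> sem t2 s" "sem t2 s \<le> 1" using I1 I2 by auto
    then show "0 \<le> sem (Odot t1 t2) s" "sem (Odot t1 t2) s \<le> 1" by auto
  next
    fix s s' assume "s \<in> cube m" "s' \<in> cube m" "\<forall>i<m. s!i \<le> s'!i"
    then have "sem t1 s \<le> sem t1 s'" "sem t2 s \<le> sem t2 s'" using I1 I2 by blast+
    then show "sem (Odot t1 t2) s \<le> sem (Odot t1 t2) s'" by auto
  qed
next
  case (Mu t)
  have IH: "(\<forall>s\<in>cube (Suc m). 0 \<le> sem t s \<and> sem t s \<le> 1) \<and>
   (\<forall>s s'. s\<in>cube (Suc m) \<longrightarrow> s'\<in>cube (Suc m) \<longrightarrow> (\<forall>i<Suc m. s!i \<le> s'!i) \<longrightarrow> sem t s \<le> sem t s')"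
    using Mu by auto
  have mono: "sem t (s @ [x]) \<le> sem t (s' @ [y])"
    if "s \<in> cube m" "s' \<in> cube m" "\<forall>i<m. s!i \<le> s'!i" "0\<le>x" "x\<le>y" "y\<le>1" for s s' x y
  proof -
    have "s @ [x] \<in> cube (Suc m)" "s' @ [y] \<in> cube (Suc m)" using that by (auto intro: cube_snoc)
    moreover have "\<forall>i<Suc m. (s@[x])!i \<le> (s'@[y])!i" using that
      by (auto simp: nth_append cube_def less_Suc_eq)
    ultimately show ?thesis using IH by blast
  qed
  have rng: "0 \<le> sem t (s @ [x]) \<and> sem t (s @ [x]) \<le> 1" if "s \<in> cube m" "0\<le>x" "x\<le>1" for s x
    using IH cube_snoc[OF that] by blast
  have L: "0 \<le> (LEAST y. 0 \<le> y \<and> y \<le> 1 \<and> sem t (s@[y]) = y) \<and> (LEAST y. 0 \<le> y \<and> y \<le> 1 \<and> sem t (s@[y]) = y) \<le> 1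
     \<and> sem t (s@[(LEAST y. 0 \<le> y \<and> y \<le> 1 \<and> sem t (s@[y]) = y)]) = (LEAST y. 0 \<le> y \<and> y \<le> 1 \<and> sem t (s@[y]) = y)
     \<and> (\<forall>y. 0\<le>y \<longrightarrow> y\<le>1 \<longrightarrow> sem t (s@[y]) \<le> y \<longrightarrow> (LEAST y. 0 \<le> y \<and> y \<le> 1 \<and> sem t (s@[y]) = y) \<le> y)"
    if "s \<in> cube m" for s
    by (rule lfp_real) (use mono[OF that that] rng[OF that] in auto)
  show ?case
  proof (intro conjI ballI allI impI)
    fix s assume "s \<in> cube m" then show "0 \<le> sem (Mu t) s" "sem (Mu t) s \<le> 1" using L by auto
  next
    fix s s' assume s: "s \<in> cube m" and s': "s' \<in> cube m" and le: "\<forall>i<m. s!i \<le> s'!i"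
    let ?l = "LEAST y. 0 \<le> y \<and> y \<le> 1 \<and> sem t (s'@[y]) = y"
    have "sem t (s@[?l]) \<le> sem t (s'@[?l])" using mono[OF s s' le, of ?l ?l] L[OF s'] by auto
    then have "sem t (s@[?l]) \<le> ?l" using L[OF s'] by auto
    then show "sem (Mu t) s \<le> sem (Mu t) s'" using L[OF s] L[OF s'] by auto
  qed
next
  case (Nu t)
  have IH: "(\<forall>s\<in>cube (Suc m). 0 \<le> sem t s \<and> sem t s \<le> 1) \<and>
   (\<forall>s s'. s\<in>cube (Suc m) \<longrightarrow> s'\<in>cube (Suc m) \<longrightarrow> (\<forall>i<Suc m. s!i \<le> s'!i) \<longrightarrow> sem t s \<le> sem t s')"
    using Nu by auto
  have mono: "sem t (s @ [x]) \<le> sem t (s' @ [y])"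
    if "s \<in> cube m" "s' \<in> cube m" "\<forall>i<m. s!i \<le> s'!i" "0\<le>x" "x\<le>y" "y\<le>1" for s s' x y
  proof -
    have "s @ [x] \<in> cube (Suc m)" "s' @ [y] \<in> cube (Suc m)" using that by (auto intro: cube_snoc)
    moreover have "\<forall>i<Suc m. (s@[x])!i \<le> (s'@[y])!i" using that
      by (auto simp: nth_append cube_def less_Suc_eq)
    ultimately show ?thesis using IH by blast
  qed
  have rng: "0 \<le> sem t (s @ [x]) \<and> sem t (s @ [x]) \<le> 1" if "s \<in> cube m" "0\<le>x" "x\<le>1" for s x
    using IH cube_snoc[OF that] by blast
  have L: "0 \<le> (GREATEST y. 0 \<le> y \<and> y \<le> 1 \<and> sem t (s@[y]) = y) \<and> (GREATEST y. 0 \<le> y \<and> y \<le> 1 \<and> sem t (s@[y]) = y) \<le> 1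
     \<and> sem t (s@[(GREATEST y. 0 \<le> y \<and> y \<le> 1 \<and> sem t (s@[y]) = y)]) = (GREATEST y. 0 \<le> y \<and> y \<le> 1 \<and> sem t (s@[y]) = y)
     \<and> (\<forall>y. 0\<le>y \<longrightarrow> y\<le>1 \<longrightarrow> y \<le> sem t (s@[y]) \<longrightarrow> y \<le> (GREATEST y. 0 \<le> y \<and> y \<le> 1 \<and> sem t (s@[y]) = y))"
    if "s \<in> cube m" for s
    by (rule gfp_real) (use mono[OF that that] rng[OF that] in auto)
  show ?case
  proof (intro conjI ballI allI impI)
    fix s assume "s \<in> cube m" then show "0 \<le> sem (Nu t) s" "sem (Nu t) s \<le> 1" using L by auto
  next
    fix s s' assume s: "s \<in> cube m" and s': "s' \<in> cube m" and le: "\<forall>i<m. s!i \<le> s'!i"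
    let ?l = "GREATEST y. 0 \<le> y \<and> y \<le> 1 \<and> sem t (s@[y]) = y"
    have "sem t (s@[?l]) \<le> sem t (s'@[?l])" using mono[OF s s' le, of ?l ?l] L[OF s] by auto
    then have "?l \<le> sem t (s'@[?l])" using L[OF s] by auto
    then show "sem (Nu t) s \<le> sem (Nu t) s'" using L[OF s] L[OF s'] by auto
  qed
qed


lemma aux1: "(a::real) > 0 \<Longrightarrow> y < - (G / a) \<Longrightarrow> a*y < -G"
  by (simp add: field_simps)
lemma aux2: "(a::real) < 0 \<Longrightarrow> - (G / a) < y \<Longrightarrow> a*y < -G"
  by (simp add: field_simps)
lemma aux3: "(a::real) > 0 \<Longrightarrow> y * a \<le> - G \<Longrightarrow> y \<le> - (G / a)"
  by (simp add: field_simps)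
lemma aux4: "(a::real) < 0 \<Longrightarrow> y * a \<le> - G \<Longrightarrow> - (G / a) \<le> y"
  by (simp add: field_simps)

lemma lev_cdiff_snoc: "length s = n \<Longrightarrow>
  lev (cdiff c) (s @ [y]) = fst (cdiff c) n * y + lev ((fst (cdiff c))(n := 0), snd (cdiff c)) s"
  using lev_snoc by blast

lemma lev_bnd: "lev (bnd n c) s = - lev ((fst (cdiff c))(n := 0), snd (cdiff c)) s / fst (cdiff c) n"
  unfolding bnd_def lev_lscale by simp

lemma holds_iff: "holds s c = (if (\<exists>a b. c = Lt a b) then lev (cdiff c) s < 0 else lev (cdiff c) s \<le> 0)"
  by (cases c) auto

lemma hold_lt_bnd: assumes "length s = n" "fst (cdiff c) n > 0" "y < lev (bnd n c) s"
  shows "holds (s @ [y]) c"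
proof -
  define a where "a = fst (cdiff c) n"
  define G where "G = lev ((fst (cdiff c))(n := 0), snd (cdiff c)) s"
  have "a * y < - G" using assms aux1[of a y G] by (simp add: lev_bnd a_def G_def)
  then have "lev (cdiff c) (s @ [y]) < 0" using lev_cdiff_snoc[OF assms(1)] by (simp add: a_def G_def)
  then show ?thesis by (simp add: holds_iff)
qed

lemma hold_le_bnd: assumes "length s = n" "fst (cdiff c) n > 0" "holds (s @ [y]) c"
  shows "y \<le> lev (bnd n c) s"
proof -
  define a where "a = fst (cdiff c) n"
  define G where "G = lev ((fst (cdiff c))(n := 0), snd (cdiff c)) s"
  have "lev (cdiff c) (s @ [y]) \<le> 0" using assms(3) by (auto simp: holds_iff split: if_splits)
  then have "a * y \<le> - G" using lev_cdiff_snoc[OF assms(1)] by (simp add: a_def G_def)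
  then have "y \<le> - (G / a)" using assms(2) aux3[of a y G] by (simp add: a_def mult.commute)
  then show ?thesis by (simp add: lev_bnd a_def G_def)
qed

lemma hold_gt_bnd_low: assumes "length s = n" "fst (cdiff c) n < 0" "lev (bnd n c) s < y"
  shows "holds (s @ [y]) c"
proof -
  define a where "a = fst (cdiff c) n"
  define G where "G = lev ((fst (cdiff c))(n := 0), snd (cdiff c)) s"
  have "a * y < - G" using assms aux2[of a G y] by (simp add: lev_bnd a_def G_def)
  then have "lev (cdiff c) (s @ [y]) < 0" using lev_cdiff_snoc[OF assms(1)] by (simp add: a_def G_def)
  then show ?thesis by (simp add: holds_iff)
qed

lemma hold_ge_bnd_low: assumes "length s = n" "fst (cdiff c) n < 0" "holds (s @ [y]) c"
  shows "lev (bnd n c) s \<le> y"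
proof -
  define a where "a = fst (cdiff c) n"
  define G where "G = lev ((fst (cdiff c))(n := 0), snd (cdiff c)) s"
  have "lev (cdiff c) (s @ [y]) \<le> 0" using assms(3) by (auto simp: holds_iff split: if_splits)
  then have "a * y \<le> - G" using lev_cdiff_snoc[OF assms(1)] by (simp add: a_def G_def)
  then have "- (G / a) \<le> y" using assms(2) aux4[of a y G] by (simp add: a_def mult.commute)
  then show ?thesis by (simp add: lev_bnd a_def G_def)
qed

lemma hold_mono: assumes "length s = n" "holds (s @ [x]) c"
  "(fst (cdiff c) n \<ge> 0 \<and> y \<le> x) \<or> (fst (cdiff c) n \<le> 0 \<and> x \<le> y)"
  shows "holds (s @ [y]) c"
proof -
  define a where "a = fst (cdiff c) n"
  have "a * y \<le> a * x" using assms(3) unfolding a_def[symmetric]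
    by (auto intro: mult_left_mono mult_left_mono_neg)
  then have "lev (cdiff c) (s @ [y]) \<le> lev (cdiff c) (s @ [x])"
    using lev_cdiff_snoc[OF assms(1), of c] by (simp add: a_def)
  then show ?thesis using assms(2) by (auto simp: holds_iff split: if_splits)
qed

lemma holdsC_convex: assumes "length s = n" "holdsC (s @ [x]) C" "holdsC (s @ [z]) C" "x \<le> y" "y \<le> z"
  shows "holdsC (s @ [y]) C"
  unfolding holdsC_def
proof
  fix c assume "c \<in> C"
  then have "holds (s @ [x]) c" "holds (s @ [z]) c" using assms by (auto simp: holdsC_def)
  then show "holds (s @ [y]) c"
    using hold_mono[OF assms(1), of x c y] hold_mono[OF assms(1), of z c y] assms(4,5)
    by (cases "fst (cdiff c) n \<ge> 0") auto
qed

lemma interval_up: assumes "length s = n" "holdsC (s @ [x]) C" "x \<le> y" "\<forall>b\<in>upper n C. y < lev b s"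
  shows "holdsC (s @ [y]) C"
  unfolding holdsC_def
proof
  fix c assume c: "c \<in> C"
  then have h: "holds (s @ [x]) c" using assms by (auto simp: holdsC_def)
  show "holds (s @ [y]) c"
  proof (cases "fst (cdiff c) n > 0")
    case True
    then have "bnd n c \<in> upper n C" using c by (auto simp: upper_def)
    then show ?thesis using assms(4) hold_lt_bnd[OF assms(1) True] by auto
  next
    case False
    then show ?thesis using hold_mono[OF assms(1) h, of y] assms(3) by auto
  qed
qed

lemma interval_low: assumes "length s = n" "holdsC (s @ [x]) C" "y \<le> x" "\<forall>a\<in>lower n C. lev a s < y"
  shows "holdsC (s @ [y]) C"
  unfolding holdsC_def
proof
  fix c assume c: "c \<in> C"
  then have h: "holds (s @ [x]) c" using assms by (auto simp: holdsC_def)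
  show "holds (s @ [y]) c"
  proof (cases "fst (cdiff c) n < 0")
    case True
    then have "bnd n c \<in> lower n C" using c by (auto simp: lower_def)
    then show ?thesis using assms(4) hold_gt_bnd_low[OF assms(1) True] by auto
  next
    case False
    then show ?thesis using hold_mono[OF assms(1) h, of y] assms(3) by auto
  qed
qed

lemma upper_bound: "length s = n \<Longrightarrow> holdsC (s @ [y]) C \<Longrightarrow> b \<in> upper n C \<Longrightarrow> y \<le> lev b s"
  by (auto simp: upper_def holdsC_def intro: hold_le_bnd)

lemma lower_bound: "length s = n \<Longrightarrow> holdsC (s @ [y]) C \<Longrightarrow> a \<in> lower n C \<Longrightarrow> lev a s \<le> y"
  by (auto simp: lower_def holdsC_def intro: hold_ge_bnd_low)

lemma finite_upper: "finite C \<Longrightarrow> finite (upper n C)"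
  unfolding upper_def by (rule finite_subset[of _ "bnd n ` C"]) auto

lemma finite_lower: "finite C \<Longrightarrow> finite (lower n C)"
  unfolding lower_def by (rule finite_subset[of _ "bnd n ` C"]) auto

lemma finite_range_c: "finite (range_c n)"
proof -
  have "range_c n = (\<lambda>k. Le (lconst 0) (lvar k)) ` {..<n} \<union> (\<lambda>k. Le (lvar k) (lconst 1)) ` {..<n}"
    by (auto simp: range_c_def)
  then show ?thesis by simp
qed

lemma range_up: "Le (lvar n) (lconst 1) \<in> C \<Longrightarrow> \<exists>b\<in>upper n C. \<forall>s. lev b s = 1"
proof -
  assume "Le (lvar n) (lconst 1) \<in> C"
  moreover have "fst (cdiff (Le (lvar n) (lconst 1))) n > 0"
    by (simp add: lsub_def lvar_def lconst_def)
  moreover have "bnd n (Le (lvar n) (lconst 1)) = ((\<lambda>_. 0), 1)"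
    by (simp add: bnd_def lsub_def lvar_def lconst_def lscale_def fun_eq_iff)
  then have "\<forall>s. lev (bnd n (Le (lvar n) (lconst 1))) s = 1"
    by (simp add: lev_def)
  ultimately show ?thesis unfolding upper_def by blast
qed

lemma range_low: "Le (lconst 0) (lvar n) \<in> C \<Longrightarrow> \<exists>a\<in>lower n C. \<forall>s. lev a s = 0"
proof -
  assume "Le (lconst 0) (lvar n) \<in> C"
  moreover have "fst (cdiff (Le (lconst 0) (lvar n))) n < 0"
    by (simp add: lsub_def lvar_def lconst_def)
  moreover have "bnd n (Le (lconst 0) (lvar n)) = ((\<lambda>_. 0), 0)"
    by (simp add: bnd_def lsub_def lvar_def lconst_def lscale_def fun_eq_iff)
  then have "\<forall>s. lev (bnd n (Le (lconst 0) (lvar n))) s = 0"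
    by (simp add: lev_def)
  ultimately show ?thesis unfolding lower_def by blast
qed

lemma range_c_Suc: "Le (lvar n) (lconst 1) \<in> range_c (Suc n)" "Le (lconst 0) (lvar n) \<in> range_c (Suc n)"
  by (auto simp: range_c_def)

lemma subst_lconst[simp]: "subst n d (lconst c) = lconst c"
  by (auto simp: subst_def lconst_def)

lemma subst_lvar: "k \<noteq> n \<Longrightarrow> subst n d (lvar k) = lvar k"
  by (auto simp: subst_def lvar_def)

lemma range_c_substC: "range_c n \<subseteq> substC n d (range_c (Suc n))"
proof
  fix c assume "c \<in> range_c n"
  then obtain k where k: "k < n" and c: "c = Le (lconst 0) (lvar k) \<or> c = Le (lvar k) (lconst 1)"
    by (auto simp: range_c_def)
  have "c \<in> range_c (Suc n)" using k c by (auto simp: range_c_def)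
  moreover have "substc n d c = c" using c k by (auto simp: subst_lvar)
  ultimately show "c \<in> substC n d (range_c (Suc n))" unfolding substC_def by (metis image_eqI)
qed

lemma holdsC_range_c: "length s = n \<Longrightarrow> holdsC s (range_c n) \<longleftrightarrow> s \<in> cube n"
proof
  assume l: "length s = n" and h: "holdsC s (range_c n)"
  have "0 \<le> s ! k \<and> s ! k \<le> 1" if "k < n" for k
  proof -
    have "Le (lconst 0) (lvar k) \<in> range_c n" "Le (lvar k) (lconst 1) \<in> range_c n"
      using that by (auto simp: range_c_def)
    then have "holds s (Le (lconst 0) (lvar k))" "holds s (Le (lvar k) (lconst 1))"
      using h by (auto simp: holdsC_def)
    then show ?thesis using that l by simp
  qed
  then show "s \<in> cube n" using l by (auto simp: cube_def in_set_conv_nth)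
next
  assume l: "length s = n" and "s \<in> cube n"
  then have "0 \<le> s ! k \<and> s ! k \<le> 1" if "k < n" for k
    using that by (auto simp: cube_def) (metis atLeastAtMost_iff nth_mem subsetD)+
  then show "holdsC s (range_c n)" using l by (auto simp: holdsC_def range_c_def)
qed

lemma holdsC_Un[simp]: "holdsC s (A \<union> B) = (holdsC s A \<and> holdsC s B)"
  by (auto simp: holdsC_def)
lemma holdsC_insert[simp]: "holdsC s (insert c A) = (holds s c \<and> holdsC s A)"
  by (auto simp: holdsC_def)
lemma holdsC_empty[simp]: "holdsC s {}"
  by (auto simp: holdsC_def)
lemma holdsC_mono: "holdsC s B \<Longrightarrow> A \<subseteq> B \<Longrightarrow> holdsC s A"
  by (auto simp: holdsC_def)

lemma finite_substC: "finite C \<Longrightarrow> finite (substC n d C)"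
  by (simp add: substC_def)


lemma obind_Some: "Some b \<in> obind A f \<longleftrightarrow> (\<exists>a. Some a \<in> A \<and> Some b \<in> f a)"
  by (auto simp: obind_def split: option.splits)

lemma obind_None: "None \<in> obind A f \<longleftrightarrow> None \<in> A \<or> (\<exists>a. Some a \<in> A \<and> None \<in> f a)"
  unfolding obind_def by (auto split: option.splits) (metis option.exhaust)

lemma obind_ne: "A \<noteq> {} \<Longrightarrow> (\<And>a. Some a \<in> A \<Longrightarrow> f a \<noteq> {}) \<Longrightarrow> obind A f \<noteq> {}"
proof -
  assume A: "A \<noteq> {}" and f: "\<And>a. Some a \<in> A \<Longrightarrow> f a \<noteq> {}"
  then obtain x where x: "x \<in> A" by auto
  show ?thesis
  proof (cases x)
    case None
    then have "None \<in> obind A f" using x unfolding obind_def by force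
    then show ?thesis by auto
  next
    case (Some a)
    then obtain y where "y \<in> f a" using f x by auto
    then have "y \<in> obind A f" using x Some unfolding obind_def by force
    then show ?thesis by auto
  qed
qed

definition good :: "nat \<Rightarrow> mterm \<Rightarrow> bool" where
  "good n t \<longleftrightarrow> (\<forall>r k C e. r \<in> cube n \<longrightarrow> Some (C, e) \<in> alg k n t r \<longrightarrow>
        holdsC r C \<and> finite C \<and> range_c n \<subseteq> C \<and> (\<forall>s. length s = n \<longrightarrow> holdsC s C \<longrightarrow> lev e s = sem t s))
     \<and> (\<exists>K. \<forall>r\<in>cube n. \<forall>k\<ge>K. None \<notin> alg k n t r \<and> alg k n t r \<noteq> {})
     \<and> finite (results n t)"

lemma alg_Suc_cases: "Some x \<in> alg k n t r \<Longrightarrow> \<exists>k'. k = Suc k'"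
  by (cases k) auto

lemma good_atom:
  assumes eq: "\<And>k. alg (Suc k) n T r = {Some (range_c n, E)}"
    and corr: "\<And>s. s \<in> cube n \<Longrightarrow> lev E s = sem T s"
  shows "(\<forall>k C e. r \<in> cube n \<longrightarrow> Some (C, e) \<in> alg k n T r \<longrightarrow>
        holdsC r C \<and> finite C \<and> range_c n \<subseteq> C \<and> (\<forall>s. length s = n \<longrightarrow> holdsC s C \<longrightarrow> lev e s = sem T s))
     \<and> (r \<in> cube n \<longrightarrow> (\<forall>k\<ge>1. None \<notin> alg k n T r \<and> alg k n T r \<noteq> {}))
     \<and> (\<forall>k res. Some res \<in> alg k n T r \<longrightarrow> res = (range_c n, E))"
proof -
  have P1: "holdsC r C \<and> finite C \<and> range_c n \<subseteq> C \<and> (\<forall>s. length s = n \<longrightarrow> holdsC s C \<longrightarrow> lev e s = sem T s)"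
    if r: "r \<in> cube n" and h: "Some (C, e) \<in> alg k n T r" for k C e
  proof -
    obtain k' where "k = Suc k'" using alg_Suc_cases h by blast
    then have CE: "C = range_c n" "e = E" using h eq by auto
    have "holdsC r C" using CE r holdsC_range_c[of r n] by (auto simp: cube_def)
    moreover have "finite C" using CE finite_range_c by simp
    moreover have "range_c n \<subseteq> C" using CE by simp
    moreover have "lev e s = sem T s" if "length s = n" "holdsC s C" for s
    proof -
      have "s \<in> cube n" using CE that holdsC_range_c by blast
      then show "lev e s = sem T s" using CE corr by simp
    qed
    ultimately show ?thesis by blast
  qed
  have P2: "None \<notin> alg k n T r \<and> alg k n T r \<noteq> {}" if k1: "1 \<le> k" for k
  proof -
    obtain k' where "k = Suc k'" using k1 by (cases k) auto
    then show ?thesis using eq[of k'] by auto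
  qed
  have P3: "res = (range_c n, E)" if h: "Some res \<in> alg k n T r" for k res
  proof -
    obtain k' where "k = Suc k'" using alg_Suc_cases h by blast
    then show "res = (range_c n, E)" using h eq by auto
  qed
  show ?thesis using P1 P2 P3 by blast
qed

lemma good_atom':
  assumes eq: "\<And>k r. alg (Suc k) n T r = {Some (range_c n, E)}"
    and corr: "\<And>s. s \<in> cube n \<Longrightarrow> lev E s = sem T s"
  shows "good n T"
proof -
  have G: "\<And>r. (\<forall>k C e. r \<in> cube n \<longrightarrow> Some (C, e) \<in> alg k n T r \<longrightarrow>
        holdsC r C \<and> finite C \<and> range_c n \<subseteq> C \<and> (\<forall>s. length s = n \<longrightarrow> holdsC s C \<longrightarrow> lev e s = sem T s))
     \<and> (r \<in> cube n \<longrightarrow> (\<forall>k\<ge>1. None \<notin> alg k n T r \<and> alg k n T r \<noteq> {}))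
     \<and> (\<forall>k res. Some res \<in> alg k n T r \<longrightarrow> res = (range_c n, E))"
    by (rule good_atom) (use eq corr in auto)
  have "results n T \<subseteq> {(range_c n, E)}" using G by (auto simp: results_def)
  then have "finite (results n T)" using finite_subset by auto
  then show ?thesis unfolding good_def using G by blast
qed

lemma good_Var: "i < n \<Longrightarrow> good n (Var i)"
  by (rule good_atom') (auto simp: cube_def)
lemma good_Zero: "good n Zero"
  by (rule good_atom') auto
lemma good_One: "good n One"
  by (rule good_atom') auto

lemma good_Scal: assumes c: "0 \<le> c" "c \<le> 1" and g: "good n t" shows "good n (Scal c t)"
proof -
  have A: "\<forall>r k C e. r \<in> cube n \<longrightarrow> Some (C, e) \<in> alg k n t r \<longrightarrow>
        holdsC r C \<and> finite C \<and> range_c n \<subseteq> C \<and> (\<forall>s. length s = n \<longrightarrow> holdsC s C \<longrightarrow> lev e s = sem t s)"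
    and fin: "finite (results n t)" using g by (auto simp: good_def)
  obtain K where K: "\<forall>r\<in>cube n. \<forall>k\<ge>K. None \<notin> alg k n t r \<and> alg k n t r \<noteq> {}" using g by (auto simp: good_def)
  have S: "Some (C, e) \<in> alg k n (Scal c t) r \<longleftrightarrow> (\<exists>k' e'. k = Suc k' \<and> Some (C, e') \<in> alg k' n t r \<and> e = lscale c e')" for k r C e
    by (cases k) (auto simp: obind_Some)
  have 1: "\<forall>r k C e. r \<in> cube n \<longrightarrow> Some (C, e) \<in> alg k n (Scal c t) r \<longrightarrow>
        holdsC r C \<and> finite C \<and> range_c n \<subseteq> C \<and> (\<forall>s. length s = n \<longrightarrow> holdsC s C \<longrightarrow> lev e s = sem (Scal c t) s)"
    using A unfolding S by fastforce
  have 2: "\<forall>r\<in>cube n. \<forall>k\<ge>Suc K. None \<notin> alg k n (Scal c t) r \<and> alg k n (Scal c t) r \<noteq> {}"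
  proof (intro ballI allI impI)
    fix r k assume r: "r \<in> cube n" and k: "Suc K \<le> k"
    then obtain k' where k': "k = Suc k'" "K \<le> k'" by (cases k) auto
    have a: "None \<notin> alg k' n t r" "alg k' n t r \<noteq> {}" using K r k' by auto
    have "obind (alg k' n t r) (\<lambda>(C, e). {Some (C, lscale c e)}) \<noteq> {}"
      by (rule obind_ne) (use a in auto)
    then show "None \<notin> alg k n (Scal c t) r \<and> alg k n (Scal c t) r \<noteq> {}"
      using a k' by (auto simp: obind_None)
  qed
  have "results n (Scal c t) \<subseteq> (\<lambda>(C, e). (C, lscale c e)) ` results n t"
    unfolding results_def using S by fastforce
  then have 3: "finite (results n (Scal c t))" using fin finite_subset by blast
  show ?thesis unfolding good_def using 1 2 3 by blast
qed


lemma ifS: "(if P then {Some (X \<union> {a}, y)} else {Some (X \<union> {a'}, y')}) = {Some (insert (if P then a else a') X, if P then y else y')}"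
  by simp

lemma good_bin:
  fixes P :: "real list \<Rightarrow> lin \<Rightarrow> lin \<Rightarrow> bool"
  assumes g1: "good n t1" and g2: "good n t2"
    and eq: "\<And>k r. alg (Suc k) n T r = obind (alg k n t1 r) (\<lambda>(C1, e1). obind (alg k n t2 r) (\<lambda>(C2, e2).
        {Some (insert (H (P r e1 e2) e1 e2) (C1 \<union> C2), E (P r e1 e2) e1 e2)}))"
    and hold: "\<And>r e1 e2. holds r (H (P r e1 e2) e1 e2)"
    and corr: "\<And>b e1 e2 s. length s = n \<Longrightarrow> holds s (H b e1 e2) \<Longrightarrow> lev e1 s = sem t1 s \<Longrightarrow> lev e2 s = sem t2 s
       \<Longrightarrow> lev (E b e1 e2) s = sem T s"
  shows "good n T"
proof -
  have A1: "\<forall>r k C e. r \<in> cube n \<longrightarrow> Some (C, e) \<in> alg k n t1 r \<longrightarrow>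
        holdsC r C \<and> finite C \<and> range_c n \<subseteq> C \<and> (\<forall>s. length s = n \<longrightarrow> holdsC s C \<longrightarrow> lev e s = sem t1 s)"
    and fin1: "finite (results n t1)" using g1 by (auto simp: good_def)
  have A2: "\<forall>r k C e. r \<in> cube n \<longrightarrow> Some (C, e) \<in> alg k n t2 r \<longrightarrow>
        holdsC r C \<and> finite C \<and> range_c n \<subseteq> C \<and> (\<forall>s. length s = n \<longrightarrow> holdsC s C \<longrightarrow> lev e s = sem t2 s)"
    and fin2: "finite (results n t2)" using g2 by (auto simp: good_def)
  obtain K1 where K1: "\<forall>r\<in>cube n. \<forall>k\<ge>K1. None \<notin> alg k n t1 r \<and> alg k n t1 r \<noteq> {}" using g1 by (auto simp: good_def)
  obtain K2 where K2: "\<forall>r\<in>cube n. \<forall>k\<ge>K2. None \<notin> alg k n t2 r \<and> alg k n t2 r \<noteq> {}" using g2 by (auto simp: good_def)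
  have S: "\<exists>k' C1 e1 C2 e2. k = Suc k' \<and> Some (C1, e1) \<in> alg k' n t1 r \<and> Some (C2, e2) \<in> alg k' n t2 r
     \<and> C = insert (H (P r e1 e2) e1 e2) (C1 \<union> C2) \<and> e = E (P r e1 e2) e1 e2"
    if h: "Some (C, e) \<in> alg k n T r" for k r C e
  proof -
    obtain k' where k: "k = Suc k'" using alg_Suc_cases h by blast
    show ?thesis using h unfolding k eq by (fastforce simp: obind_Some)
  qed
  have 1: "\<forall>r k C e. r \<in> cube n \<longrightarrow> Some (C, e) \<in> alg k n T r \<longrightarrow>
        holdsC r C \<and> finite C \<and> range_c n \<subseteq> C \<and> (\<forall>s. length s = n \<longrightarrow> holdsC s C \<longrightarrow> lev e s = sem T s)"
  proof (intro allI impI)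
    fix r k C e assume r: "r \<in> cube n" and h: "Some (C, e) \<in> alg k n T r"
    obtain k' C1 e1 C2 e2 where k: "k = Suc k'" and h1: "Some (C1, e1) \<in> alg k' n t1 r"
      and h2: "Some (C2, e2) \<in> alg k' n t2 r" and C: "C = insert (H (P r e1 e2) e1 e2) (C1 \<union> C2)"
      and e: "e = E (P r e1 e2) e1 e2" using S[OF h] by blast
    have a1: "holdsC r C1 \<and> finite C1 \<and> range_c n \<subseteq> C1 \<and> (\<forall>s. length s = n \<longrightarrow> holdsC s C1 \<longrightarrow> lev e1 s = sem t1 s)"
      using A1 r h1 by blast
    have a2: "holdsC r C2 \<and> finite C2 \<and> range_c n \<subseteq> C2 \<and> (\<forall>s. length s = n \<longrightarrow> holdsC s C2 \<longrightarrow> lev e2 s = sem t2 s)"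
      using A2 r h2 by blast
    have "lev e s = sem T s" if "length s = n" "holdsC s C" for s
      using that a1 a2 corr[of s "P r e1 e2" e1 e2] unfolding C e by auto
    then show "holdsC r C \<and> finite C \<and> range_c n \<subseteq> C \<and> (\<forall>s. length s = n \<longrightarrow> holdsC s C \<longrightarrow> lev e s = sem T s)"
      using a1 a2 hold[of r e1 e2] unfolding C by auto
  qed
  have 2: "\<forall>r\<in>cube n. \<forall>k\<ge>Suc (max K1 K2). None \<notin> alg k n T r \<and> alg k n T r \<noteq> {}"
  proof (intro ballI allI impI)
    fix r k assume r: "r \<in> cube n" and k: "Suc (max K1 K2) \<le> k"
    then obtain k' where k': "k = Suc k'" "K1 \<le> k'" "K2 \<le> k'" by (cases k) auto
    have a: "None \<notin> alg k' n t1 r" "alg k' n t1 r \<noteq> {}" "None \<notin> alg k' n t2 r" "alg k' n t2 r \<noteq> {}"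
      using K1 K2 r k' by auto
    have "obind (alg k' n t1 r) (\<lambda>(C1, e1). obind (alg k' n t2 r) (\<lambda>(C2, e2).
        {Some (insert (H (P r e1 e2) e1 e2) (C1 \<union> C2), E (P r e1 e2) e1 e2)})) \<noteq> {}"
    proof (rule obind_ne)
      show "alg k' n t1 r \<noteq> {}" using a by blast
      fix x assume "Some x \<in> alg k' n t1 r"
      obtain C1 e1 where x: "x = (C1, e1)" by (cases x) auto
      have "obind (alg k' n t2 r) (\<lambda>(C2, e2).
        {Some (insert (H (P r e1 e2) e1 e2) (C1 \<union> C2), E (P r e1 e2) e1 e2)}) \<noteq> {}"
        by (rule obind_ne) (use a in auto)
      then show "(\<lambda>(C1, e1). obind (alg k' n t2 r) (\<lambda>(C2, e2).
        {Some (insert (H (P r e1 e2) e1 e2) (C1 \<union> C2), E (P r e1 e2) e1 e2)})) x \<noteq> {}"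
        unfolding x by simp
    qed
    moreover have "None \<notin> obind (alg k' n t1 r) (\<lambda>(C1, e1). obind (alg k' n t2 r) (\<lambda>(C2, e2).
        {Some (insert (H (P r e1 e2) e1 e2) (C1 \<union> C2), E (P r e1 e2) e1 e2)}))"
      using a by (auto simp: obind_None)
    ultimately show "None \<notin> alg k n T r \<and> alg k n T r \<noteq> {}" unfolding k' eq by blast
  qed
  have sub: "results n T \<subseteq> (\<lambda>(b, (C1, e1), (C2, e2)). (insert (H b e1 e2) (C1 \<union> C2), E b e1 e2)) ` (UNIV \<times> results n t1 \<times> results n t2)"
  proof
    fix x assume "x \<in> results n T"
    then obtain r k where r: "r \<in> cube n" and h: "Some x \<in> alg k n T r" by (auto simp: results_def)
    obtain C e where x: "x = (C, e)" by (cases x) auto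
    obtain k' C1 e1 C2 e2 where k: "k = Suc k'" and h1: "Some (C1, e1) \<in> alg k' n t1 r"
      and h2: "Some (C2, e2) \<in> alg k' n t2 r" and C: "C = insert (H (P r e1 e2) e1 e2) (C1 \<union> C2)"
      and e: "e = E (P r e1 e2) e1 e2" using S h x by blast
    have "(P r e1 e2, (C1, e1), (C2, e2)) \<in> UNIV \<times> results n t1 \<times> results n t2"
      using r h1 h2 by (auto simp: results_def)
    then show "x \<in> (\<lambda>(b, (C1, e1), (C2, e2)). (insert (H b e1 e2) (C1 \<union> C2), E b e1 e2)) ` (UNIV \<times> results n t1 \<times> results n t2)"
      unfolding x C e by force
  qed
  have 3: "finite (results n T)" by (intro finite_subset[OF sub] finite_imageI) (use fin1 fin2 in \<open>simp add: finite_cartesian_product\<close>)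
  show ?thesis unfolding good_def using 1 2 3 by blast
qed

lemma good_Join: assumes "good n t1" "good n t2" shows "good n (Join t1 t2)"
  apply (rule good_bin[OF assms, where P = "\<lambda>r e1 e2. lev e1 r \<le> lev e2 r"
     and H = "\<lambda>b e1 e2. if b then Le e1 e2 else Le e2 e1" and E = "\<lambda>b e1 e2. if b then e2 else e1"])
    apply (simp only: alg.simps ifS)
   apply (simp split: if_splits)
  apply (simp split: if_splits)
  done

lemma good_Meet: assumes "good n t1" "good n t2" shows "good n (Meet t1 t2)"
  apply (rule good_bin[OF assms, where P = "\<lambda>r e1 e2. lev e1 r \<le> lev e2 r"
     and H = "\<lambda>b e1 e2. if b then Le e1 e2 else Le e2 e1" and E = "\<lambda>b e1 e2. if b then e1 else e2"])
    apply (simp only: alg.simps ifS)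
   apply (simp split: if_splits)
  apply (simp split: if_splits)
  done

lemma good_Oplus: assumes "good n t1" "good n t2" shows "good n (Oplus t1 t2)"
  apply (rule good_bin[OF assms, where P = "\<lambda>r e1 e2. lev (ladd e1 e2) r \<le> 1"
     and H = "\<lambda>b e1 e2. if b then Le (ladd e1 e2) (lconst 1) else Le (lconst 1) (ladd e1 e2)"
     and E = "\<lambda>b e1 e2. if b then ladd e1 e2 else lconst 1"])
    apply (simp only: alg.simps ifS)
   apply (simp split: if_splits)
  apply (simp split: if_splits)
  done

lemma good_Odot: assumes "good n t1" "good n t2" shows "good n (Odot t1 t2)"
  apply (rule good_bin[OF assms, where P = "\<lambda>r e1 e2. lev (ladd e1 e2) r \<le> 1"
     and H = "\<lambda>b e1 e2. if b then Le (ladd e1 e2) (lconst 1) else Le (lconst 1) (ladd e1 e2)"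
     and E = "\<lambda>b e1 e2. if b then lconst 0 else lsub (ladd e1 e2) (lconst 1)"])
    apply (simp only: alg.simps ifS)
   apply (simp split: if_splits)
  apply (simp split: if_splits)
  done


definition gq :: "nat \<Rightarrow> lin \<Rightarrow> lin" where "gq n e = ((fst e)(n := 0), snd e)"
definition fq :: "nat \<Rightarrow> lin \<Rightarrow> lin" where "fq n e = lscale (1 / (1 - fst e n)) (gq n e)"

lemma fp_check_alt: "fp_check n r D d C e =
  (if fst e n \<noteq> 1 then
     (if holdsC (r @ [lev (fq n e) r]) C
      then {Inl (D \<union> substC n d C \<union> substC n (fq n e) C, fq n e)}
      else {Inr (neg (substc n (fq n e) c)) | c. c \<in> C \<and> \<not> holds (r @ [lev (fq n e) r]) c})
   else if lev (gq n e) r = 0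
     then {Inl (D \<union> substC n d C \<union> {Le (gq n e) (lconst 0), Le (lconst 0) (gq n e)}, d)}
     else {Inr (if lev (gq n e) r < 0 then Lt (gq n e) (lconst 0) else Lt (lconst 0) (gq n e))})"
  by (simp add: fp_check_def Let_def gq_def fq_def)

lemma lev_e_snoc: "length s = n \<Longrightarrow> lev e (s @ [y]) = fst e n * y + lev (gq n e) s"
  using lev_snoc[of e s y] by (simp add: gq_def)

lemma lev_fq: "lev (fq n e) s = lev (gq n e) s / (1 - fst e n)"
  by (simp add: fq_def)

lemma holds_neg[simp]: "holds s (neg c) = (\<not> holds s c)"
  by (cases c) auto

lemma fp_Inr_nofix:
  assumes I: "Inr N \<in> fp_check n r D d C e" and l: "length s = n" and hN: "holds s N"
    and hC: "holdsC (s @ [y]) C"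
  shows "lev e (s @ [y]) \<noteq> y"
proof
  assume fx: "lev e (s @ [y]) = y"
  have ev: "lev e (s @ [y]) = fst e n * y + lev (gq n e) s" using lev_e_snoc[OF l] .
  show False
  proof (cases "fst e n = 1")
    case True
    then have "N = (if lev (gq n e) r < 0 then Lt (gq n e) (lconst 0) else Lt (lconst 0) (gq n e))"
      using I by (auto simp: fp_check_alt split: if_splits)
    then have "lev (gq n e) s \<noteq> 0" using hN by (auto split: if_splits)
    then show False using fx ev True by simp
  next
    case False
    then obtain c where c: "c \<in> C" and N: "N = neg (substc n (fq n e) c)"
      using I by (auto simp: fp_check_alt split: if_splits)
    have "\<not> holds (s @ [lev (fq n e) s]) c" using hN N holds_substc[OF l] by simp
    moreover have "lev (fq n e) s = y"
    proof -
      have "(1 - fst e n) * y = lev (gq n e) s" using fx ev by (simp add: algebra_simps)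
      then show ?thesis using False by (simp add: lev_fq field_simps)
    qed
    ultimately show False using hC c by (auto simp: holdsC_def)
  qed
qed

lemma fp_Inr_holds: assumes I: "Inr N \<in> fp_check n r D d C e" and l: "length r = n"
  shows "holds r N"
proof (cases "fst e n = 1")
  case True
  then have "N = (if lev (gq n e) r < 0 then Lt (gq n e) (lconst 0) else Lt (lconst 0) (gq n e))"
    and "lev (gq n e) r \<noteq> 0"
    using I by (auto simp: fp_check_alt split: if_splits)
  then show ?thesis by auto
next
  case False
  then obtain c where c: "c \<in> C" and N: "N = neg (substc n (fq n e) c)" and nh: "\<not> holds (r @ [lev (fq n e) r]) c"
    using I by (auto simp: fp_check_alt split: if_splits)
  then show ?thesis using holds_substc[OF l] by simp
qed

definition Npool :: "nat \<Rightarrow> cstr set \<Rightarrow> lin \<Rightarrow> cstr set" where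
  "Npool n C e = (\<lambda>c. neg (substc n (fq n e) c)) ` C \<union> {Lt (gq n e) (lconst 0), Lt (lconst 0) (gq n e)}"

lemma fp_Inr_pool: "Inr N \<in> fp_check n r D d C e \<Longrightarrow> N \<in> Npool n C e"
  by (auto simp: fp_check_alt Npool_def split: if_splits)

lemma finite_Npool: "finite C \<Longrightarrow> finite (Npool n C e)"
  by (simp add: Npool_def)

lemma fp_Inl: "Inl res \<in> fp_check n r D d C e \<Longrightarrow>
   (fst e n \<noteq> 1 \<and> holdsC (r @ [lev (fq n e) r]) C \<and> res = (D \<union> substC n d C \<union> substC n (fq n e) C, fq n e))
 \<or> (fst e n = 1 \<and> lev (gq n e) r = 0 \<and> res = (D \<union> substC n d C \<union> {Le (gq n e) (lconst 0), Le (lconst 0) (gq n e)}, d))"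
  by (auto simp: fp_check_alt split: if_splits)

lemma fp_ne: "fp_check n r D d C e \<noteq> {}"
  by (auto simp: fp_check_alt holdsC_def)

lemma aff_lim:
  fixes a b \<alpha> \<beta> M :: real
  assumes ab: "a < b" and h: "\<And>y. a \<le> y \<Longrightarrow> y < b \<Longrightarrow> \<alpha> * y + \<beta> \<le> M"
  shows "\<alpha> * b + \<beta> \<le> M"
proof (rule ccontr)
  assume "\<not> \<alpha> * b + \<beta> \<le> M"
  then have d: "\<alpha> * b + \<beta> - M > 0" by simp
  show False
  proof (cases "\<alpha> \<le> 0")
    case True
    then have "\<alpha> * b \<le> \<alpha> * a" using ab by (simp add: mult_left_mono_neg)
    then show False using h[of a] ab d by simp
  next
    case False
    define y where "y = max a (b - (\<alpha> * b + \<beta> - M) / (2 * \<alpha>))"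
    have y1: "a \<le> y" "y < b" using False d ab by (auto simp: y_def field_simps)
    have "\<alpha> * (b - (\<alpha> * b + \<beta> - M) / (2 * \<alpha>)) \<le> \<alpha> * y"
      using False by (intro mult_left_mono) (auto simp: y_def)
    moreover have "\<alpha> * (b - (\<alpha> * b + \<beta> - M) / (2 * \<alpha>)) = \<alpha> * b - (\<alpha> * b + \<beta> - M) / 2"
      using False by (simp add: field_simps)
    ultimately have e1: "\<alpha> * b - (\<alpha> * b + \<beta> - M) / 2 \<le> \<alpha> * y" by simp
    have gen: "\<And>A Y::real. A - (A + \<beta> - M) / 2 \<le> Y \<Longrightarrow> 0 < A + \<beta> - M \<Longrightarrow> M < Y + \<beta>"
      by (simp add: field_simps)
    have "\<alpha> * y + \<beta> > M" using gen[OF e1 d] .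
    then show False using h[OF y1] by simp
  qed
qed


lemma setcomp_img: "{Le b b' | b'. b' \<in> U} = (\<lambda>b'. Le b b') ` U"
  by auto
lemma setcomp_img2: "{Le a' a | a'. a' \<in> U} = (\<lambda>a'. Le a' a) ` U"
  by auto

lemma finite_min_ex: fixes f :: "'a \<Rightarrow> real"
  assumes "finite A" "A \<noteq> {}" shows "\<exists>x\<in>A. \<forall>y\<in>A. f x \<le> f y"
proof -
  have "Min (f ` A) \<in> f ` A" using assms by simp
  then obtain x where x: "x \<in> A" "f x = Min (f ` A)" by auto
  have "\<forall>y\<in>A. f x \<le> f y" using x assms by simp
  then show ?thesis using x by blast
qed

lemma finite_max_ex: fixes f :: "'a \<Rightarrow> real"
  assumes "finite A" "A \<noteq> {}" shows "\<exists>x\<in>A. \<forall>y\<in>A. f y \<le> f x"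
proof -
  have "Max (f ` A) \<in> f ` A" using assms by simp
  then obtain x where x: "x \<in> A" "f x = Max (f ` A)" by auto
  have "\<forall>y\<in>A. f y \<le> f x" using x assms by simp
  then show ?thesis using x by blast
qed

lemma cube_len: "s \<in> cube n \<Longrightarrow> length s = n"
  by (simp add: cube_def)

lemma cube_last: "s @ [y] \<in> cube (Suc n) \<Longrightarrow> 0 \<le> y \<and> y \<le> 1"
  by (auto simp: cube_def)

lemma range_sub_substC: "range_c (Suc n) \<subseteq> C \<Longrightarrow> range_c n \<subseteq> substC n d C"
proof -
  assume "range_c (Suc n) \<subseteq> C"
  then have "substC n d (range_c (Suc n)) \<subseteq> substC n d C" by (simp add: substC_def image_mono)
  then show ?thesis using range_c_substC[of n d] by blast
qed

lemma lev_var_last: "length s = n \<Longrightarrow> lev (lvar n) (s @ [y]) = y"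
  by (simp add: nth_append)

locale bodyc =
  fixes n :: nat and T :: mterm
  assumes wf: "wf_term (Suc n) T" and gd: "good (Suc n) T"
begin

abbreviation "R \<equiv> results (Suc n) T"

lemma A': "r \<in> cube (Suc n) \<Longrightarrow> Some (C, e) \<in> alg k (Suc n) T r \<Longrightarrow>
   holdsC r C \<and> finite C \<and> range_c (Suc n) \<subseteq> C \<and> (\<forall>s. length s = Suc n \<longrightarrow> holdsC s C \<longrightarrow> lev e s = sem T s)"
  using gd unfolding good_def by blast

lemma finR: "finite R"
  using gd unfolding good_def by blast

lemma R_C: "(C, e) \<in> R \<Longrightarrow> finite C \<and> range_c (Suc n) \<subseteq> C"
  unfolding results_def using A' by blast

lemma in_R: "r \<in> cube (Suc n) \<Longrightarrow> Some (C, e) \<in> alg k (Suc n) T r \<Longrightarrow> (C, e) \<in> R"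
  unfolding results_def by blast

lemma Fmono: "s \<in> cube n \<Longrightarrow> 0 \<le> x \<Longrightarrow> x \<le> y \<Longrightarrow> y \<le> 1 \<Longrightarrow> sem T (s @ [x]) \<le> sem T (s @ [y])"
proof -
  assume a: "s \<in> cube n" "0 \<le> x" "x \<le> y" "y \<le> 1"
  have c: "s @ [x] \<in> cube (Suc n)" "s @ [y] \<in> cube (Suc n)" using a by (auto intro: cube_snoc)
  have "\<forall>i<Suc n. (s@[x])!i \<le> (s@[y])!i" using a by (auto simp: nth_append cube_def less_Suc_eq)
  then show ?thesis using sem_props[OF wf] c by blast
qed

lemma Frng: "s \<in> cube n \<Longrightarrow> 0 \<le> x \<Longrightarrow> x \<le> 1 \<Longrightarrow> 0 \<le> sem T (s @ [x]) \<and> sem T (s @ [x]) \<le> 1"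
  using sem_props[OF wf] cube_snoc by blast

lemma mu_sem: assumes s: "s \<in> cube n"
  shows "0 \<le> sem (Mu T) s \<and> sem (Mu T) s \<le> 1 \<and> sem T (s @ [sem (Mu T) s]) = sem (Mu T) s
     \<and> (\<forall>y. 0 \<le> y \<longrightarrow> y \<le> 1 \<longrightarrow> sem T (s @ [y]) \<le> y \<longrightarrow> sem (Mu T) s \<le> y)"
  unfolding sem.simps
  by (rule lfp_real) (use Fmono[OF s] Frng[OF s] in auto)

lemma nu_sem: assumes s: "s \<in> cube n"
  shows "0 \<le> sem (Nu T) s \<and> sem (Nu T) s \<le> 1 \<and> sem T (s @ [sem (Nu T) s]) = sem (Nu T) s
     \<and> (\<forall>y. 0 \<le> y \<longrightarrow> y \<le> 1 \<longrightarrow> y \<le> sem T (s @ [y]) \<longrightarrow> y \<le> sem (Nu T) s)"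
  unfolding sem.simps
  by (rule gfp_real) (use Fmono[OF s] Frng[OF s] in auto)

lemma key_mu:
  assumes s: "s \<in> cube n" and hC: "holdsC (s @ [d0]) C"
    and corr: "\<forall>y. holdsC (s @ [y]) C \<longrightarrow> lev e (s @ [y]) = sem T (s @ [y])"
    and rng: "range_c (Suc n) \<subseteq> C" and b: "b \<in> upper n C"
    and bmin: "\<forall>b'\<in>upper n C. lev b s \<le> lev b' s"
    and nofix: "\<forall>y. holdsC (s @ [y]) C \<longrightarrow> lev e (s @ [y]) \<noteq> y"
    and dle: "d0 \<le> sem (Mu T) s"
  shows "d0 < lev e (s @ [lev b s]) \<and> lev e (s @ [lev b s]) \<le> sem (Mu T) s
     \<and> (\<forall>y. lev e (s @ [lev b s]) \<le> y \<longrightarrow> \<not> holdsC (s @ [y]) C)"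
proof -
  have l: "length s = n" using s by (simp add: cube_def)
  define \<mu> where "\<mu> = sem (Mu T) s"
  have mu: "0 \<le> \<mu>" "\<mu> \<le> 1" "sem T (s @ [\<mu>]) = \<mu>" "\<And>y. 0 \<le> y \<Longrightarrow> y \<le> 1 \<Longrightarrow> sem T (s @ [y]) \<le> y \<Longrightarrow> \<mu> \<le> y"
    using mu_sem[OF s] unfolding \<mu>_def by auto
  define bj where "bj = lev b s"
  define d1 where "d1 = lev e (s @ [bj])"
  define q where "q = fst e n"
  define G where "G = lev (gq n e) s"
  have ev: "\<And>y. lev e (s @ [y]) = q * y + G" using lev_e_snoc[OF l] by (simp add: q_def G_def)
  have f1: "d0 \<le> bj" using upper_bound[OF l hC b] by (simp add: bj_def)
  obtain b1 where b1: "b1 \<in> upper n C" "\<forall>s. lev b1 s = 1" using range_up[of n C] rng range_c_Suc by blast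
  have f2: "bj \<le> 1" using bmin b1 unfolding bj_def by force
  have "Le (lconst 0) (lvar n) \<in> C" using rng range_c_Suc by blast
  then have "holds (s @ [d0]) (Le (lconst 0) (lvar n))" using hC by (auto simp: holdsC_def)
  then have f3: "0 \<le> d0" using lev_var_last[OF l] by simp
  have f4: "holdsC (s @ [y]) C" if "d0 \<le> y" "y < bj" for y
  proof (rule interval_up[OF l hC that(1)])
    show "\<forall>b\<in>upper n C. y < lev b s" using that bmin unfolding bj_def by force
  qed
  have f5: "bj \<le> \<mu>"
  proof (rule ccontr)
    assume "\<not> bj \<le> \<mu>"
    then have "holdsC (s @ [\<mu>]) C" using f4 dle \<mu>_def by auto
    then show False using nofix corr mu(3) by auto
  qed
  have f6: "y < sem T (s @ [y])" if "0 \<le> y" "y < \<mu>" for y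
  proof (rule ccontr)
    assume "\<not> y < sem T (s @ [y])"
    then have "\<mu> \<le> y" using mu(4)[of y] that mu(2) by auto
    then show False using that by simp
  qed
  have main: "d0 < d1 \<and> bj \<le> d1 \<and> d1 \<le> \<mu>"
  proof (cases "d0 < bj")
    case True
    have A: "q * y + G \<le> \<mu>" if "d0 \<le> y" "y < bj" for y
    proof -
      have "q * y + G = sem T (s @ [y])" using corr f4[OF that] ev by auto
      also have "\<dots> \<le> sem T (s @ [\<mu>])" using Fmono[OF s, of y \<mu>] that f3 f5 mu by auto
      finally show ?thesis using mu(3) by simp
    qed
    have d1mu: "d1 \<le> \<mu>" using aff_lim[OF True A] ev unfolding d1_def by simp
    have B: "(1 - q) * y + (- G) \<le> 0" if "d0 \<le> y" "y < bj" for y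
    proof -
      have "y < sem T (s @ [y])" using f6[of y] that f3 f5 by auto
      also have "sem T (s @ [y]) = q * y + G" using corr f4[OF that] ev by auto
      finally show ?thesis by (simp add: algebra_simps)
    qed
    have "(1 - q) * bj + (- G) \<le> 0" using aff_lim[OF True B] .
    then have "bj \<le> d1" using ev unfolding d1_def by (simp add: algebra_simps)
    then show ?thesis using d1mu True by simp
  next
    case False
    then have eq: "d0 = bj" using f1 by simp
    have d1e: "d1 = sem T (s @ [d0])" using corr hC eq unfolding d1_def by auto
    have "d0 \<noteq> \<mu>" using nofix hC corr mu(3) by auto
    then have "d0 < \<mu>" using dle \<mu>_def by simp
    then have "d0 < d1" using f6 f3 d1e by auto
    moreover have "d1 \<le> \<mu>" using d1e Fmono[OF s, of d0 \<mu>] f3 dle mu \<mu>_def by auto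
    ultimately show ?thesis using eq by simp
  qed
  have v: "\<not> holdsC (s @ [y]) C" if "d1 \<le> y" for y
  proof
    assume h: "holdsC (s @ [y]) C"
    then have "y \<le> bj" using upper_bound[OF l h b] by (simp add: bj_def)
    then have "y = d1" "y = bj" using that main by auto
    then show False using nofix h unfolding d1_def by auto
  qed
  show ?thesis using main v unfolding d1_def bj_def \<mu>_def by auto
qed

end


context bodyc begin

definition Lp :: "lin set" where
  "Lp = {lconst 0, lconst 1} \<union> (\<Union>(C, e)\<in>R. (\<lambda>b. subst n b e) ` (upper n C \<union> lower n C)) \<union> (\<lambda>(C, e). fq n e) ` R"

definition Pp :: "cstr set set" where
  "Pp = (\<Union>(C, e)\<in>R. (\<lambda>d. substC n d C) ` Lp) \<union> (\<Union>(C, e)\<in>R. (\<lambda>N. {N}) ` Npool n C e)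
     \<union> (\<Union>(C, e)\<in>R. (\<lambda>b. (\<lambda>b'. Le b b') ` upper n C) ` upper n C)
     \<union> (\<Union>(C, e)\<in>R. (\<lambda>a. (\<lambda>a'. Le a' a) ` lower n C) ` lower n C)
     \<union> (\<lambda>(C, e). {Le (gq n e) (lconst 0), Le (lconst 0) (gq n e)}) ` R"

lemma finite_Lp: "finite Lp"
  unfolding Lp_def using finR R_C finite_upper finite_lower by (auto intro!: finite_UN_I)

lemma finite_Pp: "finite Pp"
  unfolding Pp_def using finR R_C finite_upper finite_lower finite_Lp finite_Npool by (auto intro!: finite_UN_I)

lemma Lp_subst_up: assumes "(C, e) \<in> R" "b \<in> upper n C" shows "subst n b e \<in> Lp"
proof -
  have m: "subst n b e \<in> (\<Union>(C, e)\<in>R. (\<lambda>b. subst n b e) ` (upper n C \<union> lower n C))"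
    by (rule UN_I[of "(C, e)"]) (use assms in simp_all)
  show ?thesis unfolding Lp_def by (rule UnI1[OF UnI2[OF m]])
qed
lemma Lp_subst_low: assumes "(C, e) \<in> R" "b \<in> lower n C" shows "subst n b e \<in> Lp"
proof -
  have m: "subst n b e \<in> (\<Union>(C, e)\<in>R. (\<lambda>b. subst n b e) ` (upper n C \<union> lower n C))"
    by (rule UN_I[of "(C, e)"]) (use assms in simp_all)
  show ?thesis unfolding Lp_def by (rule UnI1[OF UnI2[OF m]])
qed
lemma Lp_fq: assumes "(C, e) \<in> R" shows "fq n e \<in> Lp"
proof -
  have m: "fq n e \<in> (\<lambda>(C, e). fq n e) ` R" using assms by (rule rev_image_eqI) simp
  show ?thesis unfolding Lp_def by (rule UnI2[OF m])
qed
lemma Lp_0: "lconst 0 \<in> Lp" unfolding Lp_def by (rule UnI1, rule UnI1) simp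
lemma Lp_1: "lconst 1 \<in> Lp" unfolding Lp_def by (rule UnI1, rule UnI1) simp

lemma Pp_substC: assumes "(C, e) \<in> R" "d \<in> Lp" shows "substC n d C \<in> Pp"
proof -
  have m: "substC n d C \<in> (\<Union>(C, e)\<in>R. (\<lambda>d. substC n d C) ` Lp)"
    by (rule UN_I[of "(C, e)"]) (use assms in simp_all)
  show ?thesis unfolding Pp_def by (rule UnI1[OF UnI1[OF UnI1[OF UnI1[OF m]]]])
qed
lemma Pp_N: assumes "(C, e) \<in> R" "N \<in> Npool n C e" shows "{N} \<in> Pp"
proof -
  have m: "{N} \<in> (\<Union>(C, e)\<in>R. (\<lambda>N. {N}) ` Npool n C e)"
    by (rule UN_I[of "(C, e)"]) (use assms in simp_all)
  show ?thesis unfolding Pp_def by (rule UnI1[OF UnI1[OF UnI1[OF UnI2[OF m]]]])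
qed
lemma Pp_up: assumes "(C, e) \<in> R" "b \<in> upper n C" shows "{Le b b' | b'. b' \<in> upper n C} \<in> Pp"
proof -
  have m: "(\<lambda>b'. Le b b') ` upper n C \<in> (\<Union>(C, e)\<in>R. (\<lambda>b. (\<lambda>b'. Le b b') ` upper n C) ` upper n C)"
    by (rule UN_I[of "(C, e)"]) (use assms in simp_all)
  show ?thesis unfolding Pp_def setcomp_img by (rule UnI1[OF UnI1[OF UnI2[OF m]]])
qed
lemma Pp_low: assumes "(C, e) \<in> R" "a \<in> lower n C" shows "{Le a' a | a'. a' \<in> lower n C} \<in> Pp"
proof -
  have m: "(\<lambda>a'. Le a' a) ` lower n C \<in> (\<Union>(C, e)\<in>R. (\<lambda>a. (\<lambda>a'. Le a' a) ` lower n C) ` lower n C)"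
    by (rule UN_I[of "(C, e)"]) (use assms in simp_all)
  show ?thesis unfolding Pp_def setcomp_img2 by (rule UnI1[OF UnI2[OF m]])
qed
lemma Pp_g: assumes "(C, e) \<in> R" shows "{Le (gq n e) (lconst 0), Le (lconst 0) (gq n e)} \<in> Pp"
proof -
  have m: "{Le (gq n e) (lconst 0), Le (lconst 0) (gq n e)} \<in> (\<lambda>(C, e). {Le (gq n e) (lconst 0), Le (lconst 0) (gq n e)}) ` R"
    using assms by (rule rev_image_eqI) simp
  show ?thesis unfolding Pp_def by (rule UnI2[OF m])
qed

lemma Pp_union: "S \<subseteq> Pp \<Longrightarrow> X \<in> Pp \<Longrightarrow> \<exists>S'\<subseteq>Pp. \<Union>S \<union> X = \<Union>S'"
  by (rule exI[of _ "insert X S"]) auto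

definition inv_mu :: "real list \<Rightarrow> cstr set \<Rightarrow> lin \<Rightarrow> bool" where
  "inv_mu r D d \<longleftrightarrow> holdsC r D \<and> finite D \<and> (\<exists>S\<subseteq>Pp. D = \<Union>S) \<and> d \<in> Lp \<and> 0 \<le> lev d r \<and> lev d r \<le> 1
     \<and> (\<forall>s. length s = n \<longrightarrow> s \<in> cube n \<longrightarrow> holdsC s D \<longrightarrow> lev d s \<le> sem (Mu T) s)"

definition Qres :: "mterm \<Rightarrow> real list \<Rightarrow> cstr set \<times> lin \<Rightarrow> bool" where
  "Qres TT r res \<longleftrightarrow> holdsC r (fst res) \<and> finite (fst res) \<and> range_c n \<subseteq> fst res
     \<and> (\<forall>s. length s = n \<longrightarrow> holdsC s (fst res) \<longrightarrow> lev (snd res) s = sem TT s)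
     \<and> (\<exists>S\<subseteq>Pp. fst res = \<Union>S) \<and> snd res \<in> Lp"

lemma body_facts:
  assumes r: "r \<in> cube n" and d: "0 \<le> lev d r" "lev d r \<le> 1"
    and h: "Some (C, e) \<in> alg k (Suc n) T (r @ [lev d r])"
  shows "holdsC (r @ [lev d r]) C \<and> finite C \<and> range_c (Suc n) \<subseteq> C
     \<and> (\<forall>s y. length s = n \<longrightarrow> holdsC (s @ [y]) C \<longrightarrow> lev e (s @ [y]) = sem T (s @ [y])) \<and> (C, e) \<in> R"
proof -
  have rin: "r @ [lev d r] \<in> cube (Suc n)" using cube_snoc[OF r d] .
  show ?thesis using A'[OF rin h] in_R[OF rin h] by auto
qed

lemma step_mu:
  assumes r: "r \<in> cube n" and I: "inv_mu r D d"
    and h: "Some (C, e) \<in> alg k (Suc n) T (r @ [lev d r])"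
    and IN: "Inr N \<in> fp_check n r D d C e"
    and b: "b \<in> upper n C" and bmin: "\<forall>b'\<in>upper n C. lev b r \<le> lev b' r"
  shows "inv_mu r (D \<union> substC n d C \<union> {N} \<union> {Le b b' | b'. b' \<in> upper n C}) (subst n b e)
     \<and> lev d r < lev (subst n b e) r \<and> (\<forall>y. lev (subst n b e) r \<le> y \<longrightarrow> \<not> holdsC (r @ [y]) C)
     \<and> (C, e) \<in> R"
proof -
  have l: "length r = n" using r by (simp add: cube_def)
  have Iu: "holdsC r D" "finite D" "\<exists>S\<subseteq>Pp. D = \<Union>S" "d \<in> Lp" "0 \<le> lev d r" "lev d r \<le> 1"
    "\<And>s. length s = n \<Longrightarrow> s \<in> cube n \<Longrightarrow> holdsC s D \<Longrightarrow> lev d s \<le> sem (Mu T) s"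
    using I unfolding inv_mu_def by auto
  have B: "holdsC (r @ [lev d r]) C" "finite C" "range_c (Suc n) \<subseteq> C"
     "\<And>s y. length s = n \<Longrightarrow> holdsC (s @ [y]) C \<Longrightarrow> lev e (s @ [y]) = sem T (s @ [y])" "(C, e) \<in> R"
    using body_facts[OF r Iu(5,6) h] by auto
  have hNr: "holds r N" using fp_Inr_holds[OF IN l] .
  have K: "lev d s < lev e (s @ [lev b s]) \<and> lev e (s @ [lev b s]) \<le> sem (Mu T) s
     \<and> (\<forall>y. lev e (s @ [lev b s]) \<le> y \<longrightarrow> \<not> holdsC (s @ [y]) C)"
    if s: "s \<in> cube n" and hs: "holdsC s (D \<union> substC n d C \<union> {N} \<union> {Le b b' | b'. b' \<in> upper n C})" for s
  proof -
    have ls: "length s = n" using s by (simp add: cube_def)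
    have hD: "holdsC s D" and hsub0: "holdsC s (substC n d C)" and hN: "holds s N"
      and hsb: "holdsC s {Le b b' | b'. b' \<in> upper n C}"
      using hs by auto
    have hsub: "holdsC (s @ [lev d s]) C" using hsub0 holdsC_substC[OF ls] by simp
    have hb: "\<forall>b'\<in>upper n C. lev b s \<le> lev b' s"
    proof
      fix b' assume "b' \<in> upper n C"
      then have "Le b b' \<in> {Le b b' | b'. b' \<in> upper n C}" by blast
      then have "holds s (Le b b')" using hsb unfolding holdsC_def by blast
      then show "lev b s \<le> lev b' s" by simp
    qed
    show ?thesis
    proof (rule key_mu[OF s hsub _ B(3) b hb])
      show "\<forall>y. holdsC (s @ [y]) C \<longrightarrow> lev e (s @ [y]) = sem T (s @ [y])" using B(4) ls by blast
      show "\<forall>y. holdsC (s @ [y]) C \<longrightarrow> lev e (s @ [y]) \<noteq> y" using fp_Inr_nofix[OF IN ls hN] by blast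
      show "lev d s \<le> sem (Mu T) s" using Iu(7)[OF ls s hD] .
    qed
  qed
  have hr4: "holdsC r {Le b b' | b'. b' \<in> upper n C}" unfolding holdsC_def using bmin by auto
  have hr3: "holdsC r (substC n d C)" using B(1) holdsC_substC[OF l] by simp
  have hr: "holdsC r (D \<union> substC n d C \<union> {N} \<union> {Le b b' | b'. b' \<in> upper n C})"
    using Iu(1) hr3 hNr hr4 by simp
  have Kr: "lev d r < lev e (r @ [lev b r]) \<and> lev e (r @ [lev b r]) \<le> sem (Mu T) r
     \<and> (\<forall>y. lev e (r @ [lev b r]) \<le> y \<longrightarrow> \<not> holdsC (r @ [y]) C)" using K[OF r hr] .
  have ls: "lev (subst n b e) s = lev e (s @ [lev b s])" if "length s = n" for s
    using lev_subst[OF that] .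
  have fin4: "finite {Le b b' | b'. b' \<in> upper n C}" unfolding setcomp_img using finite_upper[OF B(2)] by simp
  have fin: "finite (D \<union> substC n d C \<union> {N} \<union> {Le b b' | b'. b' \<in> upper n C})"
    using Iu(2) B(2) fin4 by (simp add: finite_substC)
  obtain S where S: "S \<subseteq> Pp" "D = \<Union>S" using Iu(3) by blast
  have SP: "\<exists>S\<subseteq>Pp. D \<union> substC n d C \<union> {N} \<union> {Le b b' | b'. b' \<in> upper n C} = \<Union>S"
  proof (rule exI[of _ "S \<union> {substC n d C, {N}, {Le b b' | b'. b' \<in> upper n C}}"], intro conjI)
    show "S \<union> {substC n d C, {N}, {Le b b' | b'. b' \<in> upper n C}} \<subseteq> Pp"
      using S(1) Pp_substC[OF B(5) Iu(4)] Pp_N[OF B(5) fp_Inr_pool[OF IN]] Pp_up[OF B(5) b] by simp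
    show "D \<union> substC n d C \<union> {N} \<union> {Le b b' | b'. b' \<in> upper n C} = \<Union>(S \<union> {substC n d C, {N}, {Le b b' | b'. b' \<in> upper n C}})"
      using S(2) by blast
  qed
  have mur: "sem (Mu T) r \<le> 1" using mu_sem[OF r] by simp
  have "inv_mu r (D \<union> substC n d C \<union> {N} \<union> {Le b b' | b'. b' \<in> upper n C}) (subst n b e)"
    unfolding inv_mu_def
  proof (intro conjI allI impI)
    show "holdsC r (D \<union> substC n d C \<union> {N} \<union> {Le b b' | b'. b' \<in> upper n C})" using hr .
    show "finite (D \<union> substC n d C \<union> {N} \<union> {Le b b' | b'. b' \<in> upper n C})" using fin .
    show "\<exists>S\<subseteq>Pp. D \<union> substC n d C \<union> {N} \<union> {Le b b' | b'. b' \<in> upper n C} = \<Union>S" using SP .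
    show "subst n b e \<in> Lp" using Lp_subst_up[OF B(5) b] .
    show "0 \<le> lev (subst n b e) r" using Kr Iu(5) ls[OF l] by simp
    show "lev (subst n b e) r \<le> 1" using Kr mur ls[OF l] by simp
    fix s assume "length s = n" "s \<in> cube n" "holdsC s (D \<union> substC n d C \<union> {N} \<union> {Le b b' | b'. b' \<in> upper n C})"
    then show "lev (subst n b e) s \<le> sem (Mu T) s" using K ls by simp
  qed
  then show ?thesis using Kr ls[OF l] B(5) by simp
qed

lemma ret_mu:
  assumes r: "r \<in> cube n" and I: "inv_mu r D d"
    and h: "Some (C, e) \<in> alg k (Suc n) T (r @ [lev d r])"
    and IL: "Inl res \<in> fp_check n r D d C e"
  shows "Qres (Mu T) r res"
proof -
  have l: "length r = n" using r by (simp add: cube_def)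
  have Iu: "holdsC r D" "finite D" "\<exists>S\<subseteq>Pp. D = \<Union>S" "d \<in> Lp" "0 \<le> lev d r" "lev d r \<le> 1"
    "\<And>s. length s = n \<Longrightarrow> s \<in> cube n \<Longrightarrow> holdsC s D \<Longrightarrow> lev d s \<le> sem (Mu T) s"
    using I unfolding inv_mu_def by auto
  have B: "holdsC (r @ [lev d r]) C" "finite C" "range_c (Suc n) \<subseteq> C"
     "\<And>s y. length s = n \<Longrightarrow> holdsC (s @ [y]) C \<Longrightarrow> lev e (s @ [y]) = sem T (s @ [y])" "(C, e) \<in> R"
    using body_facts[OF r Iu(5,6) h] by auto
  obtain S where S: "S \<subseteq> Pp" "D = \<Union>S" using Iu(3) by blast
  have rsub: "range_c n \<subseteq> substC n d C" using range_sub_substC[OF B(3)] .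
  have cube_of: "s \<in> cube n" if "length s = n" "holdsC s (substC n d C)" for s
    using holdsC_range_c[OF that(1)] holdsC_mono[OF that(2) rsub] by blast
  have y01: "0 \<le> y \<and> y \<le> 1" if "s \<in> cube n" "holdsC (s @ [y]) C" for s y
  proof -
    have "holdsC (s @ [y]) (range_c (Suc n))" using holdsC_mono[OF that(2) B(3)] .
    then have "s @ [y] \<in> cube (Suc n)" using holdsC_range_c[of "s @ [y]" "Suc n"] that(1) by (simp add: cube_def)
    then show ?thesis by (rule cube_last)
  qed
  from fp_Inl[OF IL] show ?thesis
  proof
    assume a: "fst e n \<noteq> 1 \<and> holdsC (r @ [lev (fq n e) r]) C \<and> res = (D \<union> substC n d C \<union> substC n (fq n e) C, fq n e)"
    then have res: "res = (D \<union> substC n d C \<union> substC n (fq n e) C, fq n e)" and q: "fst e n \<noteq> 1" by auto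
    have corr: "lev (fq n e) s = sem (Mu T) s" if ls: "length s = n" and hs: "holdsC s (D \<union> substC n d C \<union> substC n (fq n e) C)" for s
    proof -
      have sc: "s \<in> cube n" using cube_of ls hs by auto
      define f where "f = lev (fq n e) s"
      define \<mu> where "\<mu> = sem (Mu T) s"
      have mu: "0 \<le> \<mu>" "\<mu> \<le> 1" "sem T (s @ [\<mu>]) = \<mu>" "\<And>y. 0 \<le> y \<Longrightarrow> y \<le> 1 \<Longrightarrow> sem T (s @ [y]) \<le> y \<Longrightarrow> \<mu> \<le> y"
        using mu_sem[OF sc] unfolding \<mu>_def by auto
      have hd: "holdsC (s @ [lev d s]) C" and hf: "holdsC (s @ [f]) C" and hD: "holdsC s D"
        using hs holdsC_substC[OF ls] unfolding f_def by auto
      have ev: "\<And>y. lev e (s @ [y]) = fst e n * y + lev (gq n e) s" using lev_e_snoc[OF ls] .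
      have ff: "fst e n * f + lev (gq n e) s = f" using q unfolding f_def lev_fq by (simp add: field_simps)
      have Ff: "sem T (s @ [f]) = f" using B(4)[OF ls hf] ev ff by simp
      have f01: "0 \<le> f" "f \<le> 1" using y01[OF sc hf] by auto
      have "\<mu> \<le> f" using mu(4)[OF f01] Ff by simp
      moreover have "lev d s \<le> \<mu>" using Iu(7)[OF ls sc hD] unfolding \<mu>_def .
      ultimately have "holdsC (s @ [\<mu>]) C" using holdsC_convex[OF ls hd hf] by simp
      then have "fst e n * \<mu> + lev (gq n e) s = \<mu>" using B(4)[OF ls] ev mu(3) by metis
      then have "\<mu> = f" using q unfolding f_def lev_fq by (simp add: field_simps)
      then show ?thesis unfolding f_def \<mu>_def by simp
    qed
    have P1: "\<exists>S\<subseteq>Pp. D \<union> substC n d C \<union> substC n (fq n e) C = \<Union>S"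
    proof (rule exI[of _ "S \<union> {substC n d C, substC n (fq n e) C}"], intro conjI)
      show "S \<union> {substC n d C, substC n (fq n e) C} \<subseteq> Pp"
        using S(1) Pp_substC[OF B(5) Iu(4)] Pp_substC[OF B(5) Lp_fq[OF B(5)]] by blast
      show "D \<union> substC n d C \<union> substC n (fq n e) C = \<Union>(S \<union> {substC n d C, substC n (fq n e) C})"
        using S(2) by blast
    qed
    have h1: "holdsC r (substC n d C)" using B(1) holdsC_substC[OF l] by simp
    have h2: "holdsC r (substC n (fq n e) C)" using a holdsC_substC[OF l] by simp
    show ?thesis unfolding Qres_def res fst_conv snd_conv
    proof (intro conjI)
      show "holdsC r (D \<union> substC n d C \<union> substC n (fq n e) C)" using Iu(1) h1 h2 by simp
      show "finite (D \<union> substC n d C \<union> substC n (fq n e) C)" using Iu(2) B(2) by (simp add: finite_substC)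
      show "range_c n \<subseteq> D \<union> substC n d C \<union> substC n (fq n e) C" using rsub by blast
      show "\<forall>s. length s = n \<longrightarrow> holdsC s (D \<union> substC n d C \<union> substC n (fq n e) C) \<longrightarrow> lev (fq n e) s = sem (Mu T) s"
        using corr by blast
      show "\<exists>S\<subseteq>Pp. D \<union> substC n d C \<union> substC n (fq n e) C = \<Union>S" using P1 .
      show "fq n e \<in> Lp" using Lp_fq[OF B(5)] .
    qed
  next
    assume a: "fst e n = 1 \<and> lev (gq n e) r = 0 \<and> res = (D \<union> substC n d C \<union> {Le (gq n e) (lconst 0), Le (lconst 0) (gq n e)}, d)"
    then have res: "res = (D \<union> substC n d C \<union> {Le (gq n e) (lconst 0), Le (lconst 0) (gq n e)}, d)" and q: "fst e n = 1" by auto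
    have corr: "lev d s = sem (Mu T) s" if ls: "length s = n" and hs: "holdsC s (D \<union> substC n d C \<union> {Le (gq n e) (lconst 0), Le (lconst 0) (gq n e)})" for s
    proof -
      have sc: "s \<in> cube n" using cube_of ls hs by auto
      define \<mu> where "\<mu> = sem (Mu T) s"
      have mu: "0 \<le> \<mu>" "\<mu> \<le> 1" "sem T (s @ [\<mu>]) = \<mu>" "\<And>y. 0 \<le> y \<Longrightarrow> y \<le> 1 \<Longrightarrow> sem T (s @ [y]) \<le> y \<Longrightarrow> \<mu> \<le> y"
        using mu_sem[OF sc] unfolding \<mu>_def by auto
      have hd: "holdsC (s @ [lev d s]) C" and hD: "holdsC s D" and g0: "lev (gq n e) s = 0"
        using hs holdsC_substC[OF ls] by auto
      have ev: "lev e (s @ [lev d s]) = lev d s" using lev_e_snoc[OF ls, of e "lev d s"] q g0 by simp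
      have Fd: "sem T (s @ [lev d s]) = lev d s" using B(4)[OF ls hd] ev by simp
      have d01: "0 \<le> lev d s" "lev d s \<le> 1" using y01[OF sc hd] by auto
      have "\<mu> \<le> lev d s" using mu(4)[OF d01] Fd by simp
      moreover have "lev d s \<le> \<mu>" using Iu(7)[OF ls sc hD] unfolding \<mu>_def .
      ultimately show ?thesis unfolding \<mu>_def by simp
    qed
    have P1: "\<exists>S\<subseteq>Pp. D \<union> substC n d C \<union> {Le (gq n e) (lconst 0), Le (lconst 0) (gq n e)} = \<Union>S"
    proof (rule exI[of _ "S \<union> {substC n d C, {Le (gq n e) (lconst 0), Le (lconst 0) (gq n e)}}"], intro conjI)
      show "S \<union> {substC n d C, {Le (gq n e) (lconst 0), Le (lconst 0) (gq n e)}} \<subseteq> Pp"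
        using S(1) Pp_substC[OF B(5) Iu(4)] Pp_g[OF B(5)] by blast
      show "D \<union> substC n d C \<union> {Le (gq n e) (lconst 0), Le (lconst 0) (gq n e)} = \<Union>(S \<union> {substC n d C, {Le (gq n e) (lconst 0), Le (lconst 0) (gq n e)}})"
        using S(2) by blast
    qed
    have h1: "holdsC r (substC n d C)" using B(1) holdsC_substC[OF l] by simp
    have h2: "holdsC r {Le (gq n e) (lconst 0), Le (lconst 0) (gq n e)}" using a by simp
    show ?thesis unfolding Qres_def res fst_conv snd_conv
    proof (intro conjI)
      show "holdsC r (D \<union> substC n d C \<union> {Le (gq n e) (lconst 0), Le (lconst 0) (gq n e)})" using Iu(1) h1 h2 by simp
      show "finite (D \<union> substC n d C \<union> {Le (gq n e) (lconst 0), Le (lconst 0) (gq n e)})" using Iu(2) B(2) by (simp add: finite_substC)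
      show "range_c n \<subseteq> D \<union> substC n d C \<union> {Le (gq n e) (lconst 0), Le (lconst 0) (gq n e)}" using rsub by blast
      show "\<forall>s. length s = n \<longrightarrow> holdsC s (D \<union> substC n d C \<union> {Le (gq n e) (lconst 0), Le (lconst 0) (gq n e)}) \<longrightarrow> lev d s = sem (Mu T) s"
        using corr by blast
      show "\<exists>S\<subseteq>Pp. D \<union> substC n d C \<union> {Le (gq n e) (lconst 0), Le (lconst 0) (gq n e)} = \<Union>S" using P1 .
      show "d \<in> Lp" using Iu(4) .
    qed
  qed
qed

end


lemma loop_mu_Some: assumes h: "Some res \<in> loop_mu (Suc k) n T r D d"
  shows "\<exists>C e x. Some (C, e) \<in> alg k (Suc n) T (r @ [lev d r]) \<and> x \<in> fp_check n r D d C e \<and>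
   (x = Inl res \<or> (\<exists>N b. x = Inr N \<and> b \<in> upper n C \<and> (\<forall>b'\<in>upper n C. lev b r \<le> lev b' r) \<and>
       Some res \<in> loop_mu k n T r (D \<union> substC n d C \<union> {N} \<union> {Le b b' | b'. b' \<in> upper n C}) (subst n b e)))"
proof -
  from h obtain a where a1: "Some a \<in> alg k (Suc n) T (r @ [lev d r])" and a2: "Some res \<in> (\<lambda>(C, e).
     \<Union>x\<in>fp_check n r D d C e. (case x of
        Inl res \<Rightarrow> {Some res}
      | Inr N \<Rightarrow> (\<Union>b\<in>{b \<in> upper n C. \<forall>b'\<in>upper n C. lev b r \<le> lev b' r}.
           loop_mu k n T r (D \<union> substC n d C \<union> {N} \<union> {Le b b' | b'. b' \<in> upper n C})
             (subst n b e)))) a"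
    unfolding loop_mu.simps obind_Some by blast
  obtain C e where ae: "a = (C, e)" by (cases a)
  from a2 obtain x where x: "x \<in> fp_check n r D d C e" and x2: "Some res \<in> (case x of
        Inl res \<Rightarrow> {Some res}
      | Inr N \<Rightarrow> (\<Union>b\<in>{b \<in> upper n C. \<forall>b'\<in>upper n C. lev b r \<le> lev b' r}.
           loop_mu k n T r (D \<union> substC n d C \<union> {N} \<union> {Le b b' | b'. b' \<in> upper n C})
             (subst n b e)))"
    unfolding ae by auto
  show ?thesis
  proof (cases x)
    case (Inl r')
    then have "x = Inl res" using x2 by simp
    then show ?thesis using a1 ae x by blast
  next
    case (Inr N)
    then obtain b where "b \<in> upper n C" "\<forall>b'\<in>upper n C. lev b r \<le> lev b' r"
      "Some res \<in> loop_mu k n T r (D \<union> substC n d C \<union> {N} \<union> {Le b b' | b'. b' \<in> upper n C}) (subst n b e)"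
      using x2 by auto
    then show ?thesis using a1 ae x Inr by blast
  qed
qed

lemma loop_nu_Some: assumes h: "Some res \<in> loop_nu (Suc k) n T r D d"
  shows "\<exists>C e x. Some (C, e) \<in> alg k (Suc n) T (r @ [lev d r]) \<and> x \<in> fp_check n r D d C e \<and>
   (x = Inl res \<or> (\<exists>N a. x = Inr N \<and> a \<in> lower n C \<and> (\<forall>a'\<in>lower n C. lev a' r \<le> lev a r) \<and>
       Some res \<in> loop_nu k n T r (D \<union> substC n d C \<union> {N} \<union> {Le a' a | a'. a' \<in> lower n C}) (subst n a e)))"
proof -
  from h obtain p where a1: "Some p \<in> alg k (Suc n) T (r @ [lev d r])" and a2: "Some res \<in> (\<lambda>(C, e).
     \<Union>x\<in>fp_check n r D d C e. (case x of
        Inl res \<Rightarrow> {Some res}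
      | Inr N \<Rightarrow> (\<Union>a\<in>{a \<in> lower n C. \<forall>a'\<in>lower n C. lev a' r \<le> lev a r}.
           loop_nu k n T r (D \<union> substC n d C \<union> {N} \<union> {Le a' a | a'. a' \<in> lower n C})
             (subst n a e)))) p"
    unfolding loop_nu.simps obind_Some by blast
  obtain C e where ae: "p = (C, e)" by (cases p)
  from a2 obtain x where x: "x \<in> fp_check n r D d C e" and x2: "Some res \<in> (case x of
        Inl res \<Rightarrow> {Some res}
      | Inr N \<Rightarrow> (\<Union>a\<in>{a \<in> lower n C. \<forall>a'\<in>lower n C. lev a' r \<le> lev a r}.
           loop_nu k n T r (D \<union> substC n d C \<union> {N} \<union> {Le a' a | a'. a' \<in> lower n C})
             (subst n a e)))"
    unfolding ae by auto
  show ?thesis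
  proof (cases x)
    case (Inl r')
    then have "x = Inl res" using x2 by simp
    then show ?thesis using a1 ae x by blast
  next
    case (Inr N)
    then obtain a where "a \<in> lower n C" "\<forall>a'\<in>lower n C. lev a' r \<le> lev a r"
      "Some res \<in> loop_nu k n T r (D \<union> substC n d C \<union> {N} \<union> {Le a' a | a'. a' \<in> lower n C}) (subst n a e)"
      using x2 by auto
    then show ?thesis using a1 ae x Inr by blast
  qed
qed


context bodyc begin

lemma loopA_mu: "r \<in> cube n \<Longrightarrow> inv_mu r D d \<Longrightarrow> Some res \<in> loop_mu k n T r D d \<Longrightarrow> Qres (Mu T) r res"
proof (induction k arbitrary: D d)
  case 0 then show ?case by simp
next
  case (Suc k)
  obtain C e x where h: "Some (C, e) \<in> alg k (Suc n) T (r @ [lev d r])" and x: "x \<in> fp_check n r D d C e"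
    and alt: "x = Inl res \<or> (\<exists>N b. x = Inr N \<and> b \<in> upper n C \<and> (\<forall>b'\<in>upper n C. lev b r \<le> lev b' r) \<and>
       Some res \<in> loop_mu k n T r (D \<union> substC n d C \<union> {N} \<union> {Le b b' | b'. b' \<in> upper n C}) (subst n b e))"
    using loop_mu_Some[OF Suc.prems(3)] by blast
  from alt show ?case
  proof
    assume "x = Inl res"
    then show ?thesis using ret_mu[OF Suc.prems(1,2) h] x by simp
  next
    assume "\<exists>N b. x = Inr N \<and> b \<in> upper n C \<and> (\<forall>b'\<in>upper n C. lev b r \<le> lev b' r) \<and>
       Some res \<in> loop_mu k n T r (D \<union> substC n d C \<union> {N} \<union> {Le b b' | b'. b' \<in> upper n C}) (subst n b e)"
    then obtain N b where xN: "x = Inr N" and b: "b \<in> upper n C" and bmin: "\<forall>b'\<in>upper n C. lev b r \<le> lev b' r"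
      and hr: "Some res \<in> loop_mu k n T r (D \<union> substC n d C \<union> {N} \<union> {Le b b' | b'. b' \<in> upper n C}) (subst n b e)"
      by blast
    have "inv_mu r (D \<union> substC n d C \<union> {N} \<union> {Le b b' | b'. b' \<in> upper n C}) (subst n b e)"
      using step_mu[OF Suc.prems(1,2) h _ b bmin] x xN by blast
    then show ?thesis using Suc.IH[OF Suc.prems(1) _ hr] by blast
  qed
qed

definition Mm :: "real list \<Rightarrow> lin \<Rightarrow> nat" where
  "Mm r d = card {C \<in> fst ` R. \<exists>y. lev d r \<le> y \<and> holdsC (r @ [y]) C}"

lemma Mm_le: "Mm r d \<le> card (fst ` R)"
  unfolding Mm_def using finR by (intro card_mono) auto

lemma Mm_dec:
  assumes lt: "lev d r < lev d' r" and CR: "(C, e) \<in> R" and hC: "holdsC (r @ [lev d r]) C"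
    and nh: "\<forall>y. lev d' r \<le> y \<longrightarrow> \<not> holdsC (r @ [y]) C"
  shows "Mm r d' < Mm r d"
proof -
  let ?S = "{C \<in> fst ` R. \<exists>y. lev d r \<le> y \<and> holdsC (r @ [y]) C}"
  let ?S' = "{C \<in> fst ` R. \<exists>y. lev d' r \<le> y \<and> holdsC (r @ [y]) C}"
  have fin: "finite ?S" using finR by simp
  have sub: "?S' \<subseteq> ?S"
  proof
    fix X assume "X \<in> ?S'"
    then obtain y where y: "X \<in> fst ` R" "lev d' r \<le> y" "holdsC (r @ [y]) X" by blast
    then have "lev d r \<le> y" using lt by simp
    then show "X \<in> ?S" using y by blast
  qed
  have "C \<in> ?S" using CR hC by force
  moreover have "C \<notin> ?S'" using nh by blast
  ultimately have "?S' \<subset> ?S" using sub by blast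
  then show ?thesis unfolding Mm_def by (rule psubset_card_mono[OF fin])
qed

lemma loopB_mu:
  assumes K': "\<forall>r'\<in>cube (Suc n). \<forall>k\<ge>K'. None \<notin> alg k (Suc n) T r' \<and> alg k (Suc n) T r' \<noteq> {}"
  shows "r \<in> cube n \<Longrightarrow> inv_mu r D d \<Longrightarrow> K' + 1 + Mm r d \<le> k \<Longrightarrow> None \<notin> loop_mu k n T r D d \<and> loop_mu k n T r D d \<noteq> {}"
proof (induction k arbitrary: D d)
  case 0 then show ?case by simp
next
  case (Suc k)
  have r: "r \<in> cube n" and I: "inv_mu r D d" using Suc.prems by auto
  have d01: "0 \<le> lev d r" "lev d r \<le> 1" using I unfolding inv_mu_def by auto
  have rin: "r @ [lev d r] \<in> cube (Suc n)" using cube_snoc[OF r d01] .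
  have kK: "K' \<le> k" using Suc.prems(3) by simp
  have Bn: "None \<notin> alg k (Suc n) T (r @ [lev d r])" "alg k (Suc n) T (r @ [lev d r]) \<noteq> {}" using K' rin kK by auto
  define \<Phi> where "\<Phi> = (\<lambda>(C, e).
     \<Union>x\<in>fp_check n r D d C e. (case x of
        Inl res \<Rightarrow> {Some res}
      | Inr N \<Rightarrow> (\<Union>b\<in>{b \<in> upper n C. \<forall>b'\<in>upper n C. lev b r \<le> lev b' r}.
           loop_mu k n T r (D \<union> substC n d C \<union> {N} \<union> {Le b b' | b'. b' \<in> upper n C})
             (subst n b e))))"
  have L: "loop_mu (Suc k) n T r D d = obind (alg k (Suc n) T (r @ [lev d r])) \<Phi>"
    unfolding \<Phi>_def by simp
  have Phi: "None \<notin> \<Phi> (C, e) \<and> \<Phi> (C, e) \<noteq> {}" if h: "Some (C, e) \<in> alg k (Suc n) T (r @ [lev d r])" for C e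
  proof -
    have BF: "holdsC (r @ [lev d r]) C" "finite C" "range_c (Suc n) \<subseteq> C" "(C, e) \<in> R"
      using body_facts[OF r d01 h] by auto
    have inner: "None \<notin> loop_mu k n T r (D \<union> substC n d C \<union> {N} \<union> {Le b b' | b'. b' \<in> upper n C}) (subst n b e)
       \<and> loop_mu k n T r (D \<union> substC n d C \<union> {N} \<union> {Le b b' | b'. b' \<in> upper n C}) (subst n b e) \<noteq> {}"
      if IN: "Inr N \<in> fp_check n r D d C e" and b: "b \<in> upper n C" and bmin: "\<forall>b'\<in>upper n C. lev b r \<le> lev b' r" for N b
    proof -
      have st: "inv_mu r (D \<union> substC n d C \<union> {N} \<union> {Le b b' | b'. b' \<in> upper n C}) (subst n b e)
         \<and> lev d r < lev (subst n b e) r \<and> (\<forall>y. lev (subst n b e) r \<le> y \<longrightarrow> \<not> holdsC (r @ [y]) C)"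
        using step_mu[OF r I h IN b bmin] by blast
      have "Mm r (subst n b e) < Mm r d" using Mm_dec[of d r "subst n b e" C e] st BF by blast
      then have "K' + 1 + Mm r (subst n b e) \<le> k" using Suc.prems(3) by simp
      then show ?thesis using Suc.IH[OF r] st by blast
    qed
    obtain b1 where b1: "b1 \<in> upper n C" using range_up[of n C] BF(3) range_c_Suc by blast
    obtain bm where bm: "bm \<in> upper n C" "\<forall>b'\<in>upper n C. lev bm r \<le> lev b' r"
      using finite_min_ex[of "upper n C" "\<lambda>b. lev b r"] finite_upper[OF BF(2)] b1 by blast
    have nN: "None \<notin> (case x of
        Inl res \<Rightarrow> {Some res}
      | Inr N \<Rightarrow> (\<Union>b\<in>{b \<in> upper n C. \<forall>b'\<in>upper n C. lev b r \<le> lev b' r}.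
           loop_mu k n T r (D \<union> substC n d C \<union> {N} \<union> {Le b b' | b'. b' \<in> upper n C})
             (subst n b e)))
      \<and> (case x of
        Inl res \<Rightarrow> {Some res}
      | Inr N \<Rightarrow> (\<Union>b\<in>{b \<in> upper n C. \<forall>b'\<in>upper n C. lev b r \<le> lev b' r}.
           loop_mu k n T r (D \<union> substC n d C \<union> {N} \<union> {Le b b' | b'. b' \<in> upper n C})
             (subst n b e))) \<noteq> {}"
      if x: "x \<in> fp_check n r D d C e" for x
    proof (cases x)
      case (Inl a) then show ?thesis by simp
    next
      case (Inr N)
      have "None \<notin> (\<Union>b\<in>{b \<in> upper n C. \<forall>b'\<in>upper n C. lev b r \<le> lev b' r}.
           loop_mu k n T r (D \<union> substC n d C \<union> {N} \<union> {Le b b' | b'. b' \<in> upper n C}) (subst n b e))"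
        using inner[of N] x Inr by blast
      moreover have "(\<Union>b\<in>{b \<in> upper n C. \<forall>b'\<in>upper n C. lev b r \<le> lev b' r}.
           loop_mu k n T r (D \<union> substC n d C \<union> {N} \<union> {Le b b' | b'. b' \<in> upper n C}) (subst n b e)) \<noteq> {}"
        using inner[of N bm] x Inr bm by blast
      ultimately show ?thesis using Inr by simp
    qed
    obtain x0 where x0: "x0 \<in> fp_check n r D d C e" using fp_ne by blast
    show ?thesis unfolding \<Phi>_def using nN x0 by (auto simp del: sum.case)
  qed
  have "None \<notin> obind (alg k (Suc n) T (r @ [lev d r])) \<Phi>"
    using Bn(1) Phi by (auto simp: obind_None)
  moreover have "obind (alg k (Suc n) T (r @ [lev d r])) \<Phi> \<noteq> {}"
  proof (rule obind_ne[OF Bn(2)])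
    fix a assume "Some a \<in> alg k (Suc n) T (r @ [lev d r])"
    then show "\<Phi> a \<noteq> {}" using Phi by (cases a) auto
  qed
  ultimately show ?case unfolding L by blast
qed

lemma inv_mu_init: "r \<in> cube n \<Longrightarrow> inv_mu r {} (lconst 0)"
  unfolding inv_mu_def using Lp_0 mu_sem by (auto intro!: exI[of _ "{}"])

lemma good_Mu: "good n (Mu T)"
proof -
  obtain K' where K': "\<forall>r'\<in>cube (Suc n). \<forall>k\<ge>K'. None \<notin> alg k (Suc n) T r' \<and> alg k (Suc n) T r' \<noteq> {}"
    using gd unfolding good_def by blast
  have Q: "Qres (Mu T) r (C, e)" if r: "r \<in> cube n" and h: "Some (C, e) \<in> alg k n (Mu T) r" for r k C e
  proof -
    obtain k' where k: "k = Suc k'" using alg_Suc_cases h by blast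
    have "Some (C, e) \<in> loop_mu k' n T r {} (lconst 0)" using h k by simp
    then show ?thesis using loopA_mu[OF r inv_mu_init[OF r]] by blast
  qed
  have 1: "\<forall>r k C e. r \<in> cube n \<longrightarrow> Some (C, e) \<in> alg k n (Mu T) r \<longrightarrow>
        holdsC r C \<and> finite C \<and> range_c n \<subseteq> C \<and> (\<forall>s. length s = n \<longrightarrow> holdsC s C \<longrightarrow> lev e s = sem (Mu T) s)"
    using Q unfolding Qres_def by fastforce
  have 2: "\<forall>r\<in>cube n. \<forall>k\<ge>K' + card (fst ` R) + 2. None \<notin> alg k n (Mu T) r \<and> alg k n (Mu T) r \<noteq> {}"
  proof (intro ballI allI impI)
    fix r k assume r: "r \<in> cube n" and k: "K' + card (fst ` R) + 2 \<le> k"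
    then obtain k' where k': "k = Suc k'" by (cases k) auto
    have "K' + 1 + Mm r (lconst 0) \<le> k'" using Mm_le[of r "lconst 0"] k k' by simp
    then show "None \<notin> alg k n (Mu T) r \<and> alg k n (Mu T) r \<noteq> {}"
      using loopB_mu[OF K' r inv_mu_init[OF r]] k' by simp
  qed
  have sub: "results n (Mu T) \<subseteq> (\<lambda>(S, l). (\<Union>S, l)) ` (Pow Pp \<times> Lp)"
  proof
    fix x assume "x \<in> results n (Mu T)"
    then obtain r k where r: "r \<in> cube n" and h: "Some x \<in> alg k n (Mu T) r" by (auto simp: results_def)
    obtain C e where x: "x = (C, e)" by (cases x) auto
    have "Qres (Mu T) r (C, e)" using Q r h x by blast
    then obtain S where "S \<subseteq> Pp" "C = \<Union>S" "e \<in> Lp" unfolding Qres_def by auto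
    then show "x \<in> (\<lambda>(S, l). (\<Union>S, l)) ` (Pow Pp \<times> Lp)" unfolding x by force
  qed
  have 3: "finite (results n (Mu T))"
    by (rule finite_subset[OF sub]) (use finite_Pp finite_Lp in simp)
  show ?thesis unfolding good_def using 1 2 3 by blast
qed

end


lemma aff_lim2:
  fixes a b \<alpha> \<beta> M :: real
  assumes ab: "a < b" and h: "\<And>y. a < y \<Longrightarrow> y \<le> b \<Longrightarrow> \<alpha> * y + \<beta> \<le> M"
  shows "\<alpha> * a + \<beta> \<le> M"
proof -
  have "(- \<alpha>) * (- a) + \<beta> \<le> M"
  proof (rule aff_lim)
    show "- b < - a" using ab by simp
    fix z assume "- b \<le> z" "z < - a"
    then have e: "(-\<alpha>) * z + \<beta> = \<alpha> * (- z) + \<beta>" and z: "a < - z" "- z \<le> b" by auto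
    show "(- \<alpha>) * z + \<beta> \<le> M" unfolding e using h[OF z] .
  qed
  then show ?thesis by simp
qed

context bodyc begin

lemma key_nu:
  assumes s: "s \<in> cube n" and hC: "holdsC (s @ [d0]) C"
    and corr: "\<forall>y. holdsC (s @ [y]) C \<longrightarrow> lev e (s @ [y]) = sem T (s @ [y])"
    and rng: "range_c (Suc n) \<subseteq> C" and a: "a \<in> lower n C"
    and amax: "\<forall>a'\<in>lower n C. lev a' s \<le> lev a s"
    and nofix: "\<forall>y. holdsC (s @ [y]) C \<longrightarrow> lev e (s @ [y]) \<noteq> y"
    and dge: "sem (Nu T) s \<le> d0"
  shows "lev e (s @ [lev a s]) < d0 \<and> sem (Nu T) s \<le> lev e (s @ [lev a s])
     \<and> (\<forall>y. y \<le> lev e (s @ [lev a s]) \<longrightarrow> \<not> holdsC (s @ [y]) C)"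
proof -
  have l: "length s = n" using s by (simp add: cube_def)
  define \<nu> where "\<nu> = sem (Nu T) s"
  have nu: "0 \<le> \<nu>" "\<nu> \<le> 1" "sem T (s @ [\<nu>]) = \<nu>" "\<And>y. 0 \<le> y \<Longrightarrow> y \<le> 1 \<Longrightarrow> y \<le> sem T (s @ [y]) \<Longrightarrow> y \<le> \<nu>"
    using nu_sem[OF s] unfolding \<nu>_def by auto
  define aj where "aj = lev a s"
  define d1 where "d1 = lev e (s @ [aj])"
  define q where "q = fst e n"
  define G where "G = lev (gq n e) s"
  have ev: "\<And>y. lev e (s @ [y]) = q * y + G" using lev_e_snoc[OF l] by (simp add: q_def G_def)
  have f1: "aj \<le> d0" using lower_bound[OF l hC a] by (simp add: aj_def)
  obtain a0 where a0: "a0 \<in> lower n C" "\<forall>s. lev a0 s = 0" using range_low[of n C] rng range_c_Suc by blast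
  have f2: "0 \<le> aj" using amax a0 unfolding aj_def by force
  have "Le (lvar n) (lconst 1) \<in> C" using rng range_c_Suc by blast
  then have "holds (s @ [d0]) (Le (lvar n) (lconst 1))" using hC by (auto simp: holdsC_def)
  then have f3: "d0 \<le> 1" using lev_var_last[OF l] by simp
  have f4: "holdsC (s @ [y]) C" if "aj < y" "y \<le> d0" for y
  proof (rule interval_low[OF l hC that(2)])
    show "\<forall>a\<in>lower n C. lev a s < y" using that amax unfolding aj_def by force
  qed
  have f5: "\<nu> \<le> aj"
  proof (rule ccontr)
    assume "\<not> \<nu> \<le> aj"
    then have "holdsC (s @ [\<nu>]) C" using f4 dge \<nu>_def by auto
    then show False using nofix corr nu(3) by auto
  qed
  have f6: "sem T (s @ [y]) < y" if "\<nu> < y" "y \<le> 1" for y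
  proof (rule ccontr)
    assume "\<not> sem T (s @ [y]) < y"
    then have "y \<le> \<nu>" using nu(4)[of y] that nu(1) by auto
    then show False using that by simp
  qed
  have main: "d1 < d0 \<and> d1 \<le> aj \<and> \<nu> \<le> d1"
  proof (cases "aj < d0")
    case True
    have A: "(- q) * y + (- G) \<le> - \<nu>" if "aj < y" "y \<le> d0" for y
    proof -
      have "\<nu> = sem T (s @ [\<nu>])" using nu(3) by simp
      also have "\<dots> \<le> sem T (s @ [y])" using Fmono[OF s, of \<nu> y] that f3 f5 nu by auto
      also have "\<dots> = q * y + G" using corr f4[OF that] ev by auto
      finally show ?thesis by simp
    qed
    have d1nu: "\<nu> \<le> d1" using aff_lim2[OF True A] ev unfolding d1_def by simp
    have B: "(q - 1) * y + G \<le> 0" if "aj < y" "y \<le> d0" for y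
    proof -
      have "sem T (s @ [y]) < y" using f6[of y] that f3 f5 by auto
      moreover have "sem T (s @ [y]) = q * y + G" using corr f4[OF that] ev by auto
      ultimately show ?thesis by (simp add: algebra_simps)
    qed
    have "(q - 1) * aj + G \<le> 0" using aff_lim2[OF True B] .
    then have "d1 \<le> aj" using ev unfolding d1_def by (simp add: algebra_simps)
    then show ?thesis using d1nu True by simp
  next
    case False
    then have eq: "d0 = aj" using f1 by simp
    have d1e: "d1 = sem T (s @ [d0])" using corr hC eq unfolding d1_def by auto
    have "d0 \<noteq> \<nu>" using nofix hC corr nu(3) by auto
    then have "\<nu> < d0" using dge \<nu>_def by simp
    then have "d1 < d0" using f6 f3 d1e by auto
    moreover have "\<nu> \<le> d1" using d1e Fmono[OF s, of \<nu> d0] f3 dge nu \<nu>_def by auto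
    ultimately show ?thesis using eq by simp
  qed
  have v: "\<not> holdsC (s @ [y]) C" if "y \<le> d1" for y
  proof
    assume h: "holdsC (s @ [y]) C"
    then have "aj \<le> y" using lower_bound[OF l h a] by (simp add: aj_def)
    then have "y = d1" "y = aj" using that main by auto
    then show False using nofix h unfolding d1_def by auto
  qed
  show ?thesis using main v unfolding d1_def aj_def \<nu>_def by auto
qed

definition inv_nu :: "real list \<Rightarrow> cstr set \<Rightarrow> lin \<Rightarrow> bool" where
  "inv_nu r D d \<longleftrightarrow> holdsC r D \<and> finite D \<and> (\<exists>S\<subseteq>Pp. D = \<Union>S) \<and> d \<in> Lp \<and> 0 \<le> lev d r \<and> lev d r \<le> 1
     \<and> (\<forall>s. length s = n \<longrightarrow> s \<in> cube n \<longrightarrow> holdsC s D \<longrightarrow> sem (Nu T) s \<le> lev d s)"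

lemma step_nu:
  assumes r: "r \<in> cube n" and I: "inv_nu r D d"
    and h: "Some (C, e) \<in> alg k (Suc n) T (r @ [lev d r])"
    and IN: "Inr N \<in> fp_check n r D d C e"
    and a: "a \<in> lower n C" and amax: "\<forall>a'\<in>lower n C. lev a' r \<le> lev a r"
  shows "inv_nu r (D \<union> substC n d C \<union> {N} \<union> {Le a' a | a'. a' \<in> lower n C}) (subst n a e)
     \<and> lev (subst n a e) r < lev d r \<and> (\<forall>y. y \<le> lev (subst n a e) r \<longrightarrow> \<not> holdsC (r @ [y]) C)
     \<and> (C, e) \<in> R"
proof -
  have l: "length r = n" using r by (simp add: cube_def)
  have Iu: "holdsC r D" "finite D" "\<exists>S\<subseteq>Pp. D = \<Union>S" "d \<in> Lp" "0 \<le> lev d r" "lev d r \<le> 1"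
    "\<And>s. length s = n \<Longrightarrow> s \<in> cube n \<Longrightarrow> holdsC s D \<Longrightarrow> sem (Nu T) s \<le> lev d s"
    using I unfolding inv_nu_def by auto
  have B: "holdsC (r @ [lev d r]) C" "finite C" "range_c (Suc n) \<subseteq> C"
     "\<And>s y. length s = n \<Longrightarrow> holdsC (s @ [y]) C \<Longrightarrow> lev e (s @ [y]) = sem T (s @ [y])" "(C, e) \<in> R"
    using body_facts[OF r Iu(5,6) h] by auto
  have hNr: "holds r N" using fp_Inr_holds[OF IN l] .
  have K: "lev e (s @ [lev a s]) < lev d s \<and> sem (Nu T) s \<le> lev e (s @ [lev a s])
     \<and> (\<forall>y. y \<le> lev e (s @ [lev a s]) \<longrightarrow> \<not> holdsC (s @ [y]) C)"
    if s: "s \<in> cube n" and hs: "holdsC s (D \<union> substC n d C \<union> {N} \<union> {Le a' a | a'. a' \<in> lower n C})" for s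
  proof -
    have ls: "length s = n" using s by (simp add: cube_def)
    have hD: "holdsC s D" and hsub0: "holdsC s (substC n d C)" and hN: "holds s N"
      and hsb: "holdsC s {Le a' a | a'. a' \<in> lower n C}"
      using hs by auto
    have hsub: "holdsC (s @ [lev d s]) C" using hsub0 holdsC_substC[OF ls] by simp
    have ha: "\<forall>a'\<in>lower n C. lev a' s \<le> lev a s"
    proof
      fix a' assume "a' \<in> lower n C"
      then have "Le a' a \<in> {Le a' a | a'. a' \<in> lower n C}" by blast
      then have "holds s (Le a' a)" using hsb unfolding holdsC_def by blast
      then show "lev a' s \<le> lev a s" by simp
    qed
    show ?thesis
    proof (rule key_nu[OF s hsub _ B(3) a ha])
      show "\<forall>y. holdsC (s @ [y]) C \<longrightarrow> lev e (s @ [y]) = sem T (s @ [y])" using B(4) ls by blast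
      show "\<forall>y. holdsC (s @ [y]) C \<longrightarrow> lev e (s @ [y]) \<noteq> y" using fp_Inr_nofix[OF IN ls hN] by blast
      show "sem (Nu T) s \<le> lev d s" using Iu(7)[OF ls s hD] .
    qed
  qed
  have hr4: "holdsC r {Le a' a | a'. a' \<in> lower n C}" unfolding holdsC_def using amax by auto
  have hr3: "holdsC r (substC n d C)" using B(1) holdsC_substC[OF l] by simp
  have hr: "holdsC r (D \<union> substC n d C \<union> {N} \<union> {Le a' a | a'. a' \<in> lower n C})"
    using Iu(1) hr3 hNr hr4 by simp
  have Kr: "lev e (r @ [lev a r]) < lev d r \<and> sem (Nu T) r \<le> lev e (r @ [lev a r])
     \<and> (\<forall>y. y \<le> lev e (r @ [lev a r]) \<longrightarrow> \<not> holdsC (r @ [y]) C)" using K[OF r hr] .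
  have ls: "lev (subst n a e) s = lev e (s @ [lev a s])" if "length s = n" for s
    using lev_subst[OF that] .
  have fin4: "finite {Le a' a | a'. a' \<in> lower n C}" unfolding setcomp_img2 using finite_lower[OF B(2)] by simp
  have fin: "finite (D \<union> substC n d C \<union> {N} \<union> {Le a' a | a'. a' \<in> lower n C})"
    using Iu(2) B(2) fin4 by (simp add: finite_substC)
  obtain S where S: "S \<subseteq> Pp" "D = \<Union>S" using Iu(3) by blast
  have SP: "\<exists>S\<subseteq>Pp. D \<union> substC n d C \<union> {N} \<union> {Le a' a | a'. a' \<in> lower n C} = \<Union>S"
  proof (rule exI[of _ "S \<union> {substC n d C, {N}, {Le a' a | a'. a' \<in> lower n C}}"], intro conjI)
    show "S \<union> {substC n d C, {N}, {Le a' a | a'. a' \<in> lower n C}} \<subseteq> Pp"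
      using S(1) Pp_substC[OF B(5) Iu(4)] Pp_N[OF B(5) fp_Inr_pool[OF IN]] Pp_low[OF B(5) a] by simp
    show "D \<union> substC n d C \<union> {N} \<union> {Le a' a | a'. a' \<in> lower n C} = \<Union>(S \<union> {substC n d C, {N}, {Le a' a | a'. a' \<in> lower n C}})"
      using S(2) by blast
  qed
  have nur: "0 \<le> sem (Nu T) r" using nu_sem[OF r] by simp
  have "inv_nu r (D \<union> substC n d C \<union> {N} \<union> {Le a' a | a'. a' \<in> lower n C}) (subst n a e)"
    unfolding inv_nu_def
  proof (intro conjI allI impI)
    show "holdsC r (D \<union> substC n d C \<union> {N} \<union> {Le a' a | a'. a' \<in> lower n C})" using hr .
    show "finite (D \<union> substC n d C \<union> {N} \<union> {Le a' a | a'. a' \<in> lower n C})" using fin .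
    show "\<exists>S\<subseteq>Pp. D \<union> substC n d C \<union> {N} \<union> {Le a' a | a'. a' \<in> lower n C} = \<Union>S" using SP .
    show "subst n a e \<in> Lp" using Lp_subst_low[OF B(5) a] .
    show "0 \<le> lev (subst n a e) r" using Kr nur ls[OF l] by simp
    show "lev (subst n a e) r \<le> 1" using Kr Iu(6) ls[OF l] by simp
    fix s assume "length s = n" "s \<in> cube n" "holdsC s (D \<union> substC n d C \<union> {N} \<union> {Le a' a | a'. a' \<in> lower n C})"
    then show "sem (Nu T) s \<le> lev (subst n a e) s" using K ls by simp
  qed
  then show ?thesis using Kr ls[OF l] B(5) by simp
qed

end


context bodyc begin

lemma ret_nu:
  assumes r: "r \<in> cube n" and I: "inv_nu r D d"
    and h: "Some (C, e) \<in> alg k (Suc n) T (r @ [lev d r])"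
    and IL: "Inl res \<in> fp_check n r D d C e"
  shows "Qres (Nu T) r res"
proof -
  have l: "length r = n" using r by (simp add: cube_def)
  have Iu: "holdsC r D" "finite D" "\<exists>S\<subseteq>Pp. D = \<Union>S" "d \<in> Lp" "0 \<le> lev d r" "lev d r \<le> 1"
    "\<And>s. length s = n \<Longrightarrow> s \<in> cube n \<Longrightarrow> holdsC s D \<Longrightarrow> sem (Nu T) s \<le> lev d s"
    using I unfolding inv_nu_def by auto
  have B: "holdsC (r @ [lev d r]) C" "finite C" "range_c (Suc n) \<subseteq> C"
     "\<And>s y. length s = n \<Longrightarrow> holdsC (s @ [y]) C \<Longrightarrow> lev e (s @ [y]) = sem T (s @ [y])" "(C, e) \<in> R"
    using body_facts[OF r Iu(5,6) h] by auto
  obtain S where S: "S \<subseteq> Pp" "D = \<Union>S" using Iu(3) by blast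
  have rsub: "range_c n \<subseteq> substC n d C" using range_sub_substC[OF B(3)] .
  have cube_of: "s \<in> cube n" if "length s = n" "holdsC s (substC n d C)" for s
    using holdsC_range_c[OF that(1)] holdsC_mono[OF that(2) rsub] by blast
  have y01: "0 \<le> y \<and> y \<le> 1" if "s \<in> cube n" "holdsC (s @ [y]) C" for s y
  proof -
    have "holdsC (s @ [y]) (range_c (Suc n))" using holdsC_mono[OF that(2) B(3)] .
    then have "s @ [y] \<in> cube (Suc n)" using holdsC_range_c[of "s @ [y]" "Suc n"] that(1) by (simp add: cube_def)
    then show ?thesis by (rule cube_last)
  qed
  from fp_Inl[OF IL] show ?thesis
  proof
    assume a: "fst e n \<noteq> 1 \<and> holdsC (r @ [lev (fq n e) r]) C \<and> res = (D \<union> substC n d C \<union> substC n (fq n e) C, fq n e)"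
    then have res: "res = (D \<union> substC n d C \<union> substC n (fq n e) C, fq n e)" and q: "fst e n \<noteq> 1" by auto
    have corr: "lev (fq n e) s = sem (Nu T) s" if ls: "length s = n" and hs: "holdsC s (D \<union> substC n d C \<union> substC n (fq n e) C)" for s
    proof -
      have sc: "s \<in> cube n" using cube_of ls hs by auto
      define f where "f = lev (fq n e) s"
      define \<nu> where "\<nu> = sem (Nu T) s"
      have nu: "0 \<le> \<nu>" "\<nu> \<le> 1" "sem T (s @ [\<nu>]) = \<nu>" "\<And>y. 0 \<le> y \<Longrightarrow> y \<le> 1 \<Longrightarrow> y \<le> sem T (s @ [y]) \<Longrightarrow> y \<le> \<nu>"
        using nu_sem[OF sc] unfolding \<nu>_def by auto
      have hd: "holdsC (s @ [lev d s]) C" and hf: "holdsC (s @ [f]) C" and hD: "holdsC s D"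
        using hs holdsC_substC[OF ls] unfolding f_def by auto
      have ev: "\<And>y. lev e (s @ [y]) = fst e n * y + lev (gq n e) s" using lev_e_snoc[OF ls] .
      have ff: "fst e n * f + lev (gq n e) s = f" using q unfolding f_def lev_fq by (simp add: field_simps)
      have Ff: "sem T (s @ [f]) = f" using B(4)[OF ls hf] ev ff by simp
      have f01: "0 \<le> f" "f \<le> 1" using y01[OF sc hf] by auto
      have "f \<le> \<nu>" using nu(4)[OF f01] Ff by simp
      moreover have "\<nu> \<le> lev d s" using Iu(7)[OF ls sc hD] unfolding \<nu>_def .
      ultimately have "holdsC (s @ [\<nu>]) C" using holdsC_convex[OF ls hf hd] by simp
      then have "fst e n * \<nu> + lev (gq n e) s = \<nu>" using B(4)[OF ls] ev nu(3) by metis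
      then have "\<nu> = f" using q unfolding f_def lev_fq by (simp add: field_simps)
      then show ?thesis unfolding f_def \<nu>_def by simp
    qed
    have P1: "\<exists>S\<subseteq>Pp. D \<union> substC n d C \<union> substC n (fq n e) C = \<Union>S"
    proof (rule exI[of _ "S \<union> {substC n d C, substC n (fq n e) C}"], intro conjI)
      show "S \<union> {substC n d C, substC n (fq n e) C} \<subseteq> Pp"
        using S(1) Pp_substC[OF B(5) Iu(4)] Pp_substC[OF B(5) Lp_fq[OF B(5)]] by blast
      show "D \<union> substC n d C \<union> substC n (fq n e) C = \<Union>(S \<union> {substC n d C, substC n (fq n e) C})"
        using S(2) by blast
    qed
    have h1: "holdsC r (substC n d C)" using B(1) holdsC_substC[OF l] by simp
    have h2: "holdsC r (substC n (fq n e) C)" using a holdsC_substC[OF l] by simp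
    show ?thesis unfolding Qres_def res fst_conv snd_conv
    proof (intro conjI)
      show "holdsC r (D \<union> substC n d C \<union> substC n (fq n e) C)" using Iu(1) h1 h2 by simp
      show "finite (D \<union> substC n d C \<union> substC n (fq n e) C)" using Iu(2) B(2) by (simp add: finite_substC)
      show "range_c n \<subseteq> D \<union> substC n d C \<union> substC n (fq n e) C" using rsub by blast
      show "\<forall>s. length s = n \<longrightarrow> holdsC s (D \<union> substC n d C \<union> substC n (fq n e) C) \<longrightarrow> lev (fq n e) s = sem (Nu T) s"
        using corr by blast
      show "\<exists>S\<subseteq>Pp. D \<union> substC n d C \<union> substC n (fq n e) C = \<Union>S" using P1 .
      show "fq n e \<in> Lp" using Lp_fq[OF B(5)] .
    qed
  next
    assume a: "fst e n = 1 \<and> lev (gq n e) r = 0 \<and> res = (D \<union> substC n d C \<union> {Le (gq n e) (lconst 0), Le (lconst 0) (gq n e)}, d)"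
    then have res: "res = (D \<union> substC n d C \<union> {Le (gq n e) (lconst 0), Le (lconst 0) (gq n e)}, d)" and q: "fst e n = 1" by auto
    have corr: "lev d s = sem (Nu T) s" if ls: "length s = n" and hs: "holdsC s (D \<union> substC n d C \<union> {Le (gq n e) (lconst 0), Le (lconst 0) (gq n e)})" for s
    proof -
      have sc: "s \<in> cube n" using cube_of ls hs by auto
      define \<nu> where "\<nu> = sem (Nu T) s"
      have nu: "0 \<le> \<nu>" "\<nu> \<le> 1" "sem T (s @ [\<nu>]) = \<nu>" "\<And>y. 0 \<le> y \<Longrightarrow> y \<le> 1 \<Longrightarrow> y \<le> sem T (s @ [y]) \<Longrightarrow> y \<le> \<nu>"
        using nu_sem[OF sc] unfolding \<nu>_def by auto
      have hd: "holdsC (s @ [lev d s]) C" and hD: "holdsC s D" and g0: "lev (gq n e) s = 0"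
        using hs holdsC_substC[OF ls] by auto
      have ev: "lev e (s @ [lev d s]) = lev d s" using lev_e_snoc[OF ls, of e "lev d s"] q g0 by simp
      have Fd: "sem T (s @ [lev d s]) = lev d s" using B(4)[OF ls hd] ev by simp
      have d01: "0 \<le> lev d s" "lev d s \<le> 1" using y01[OF sc hd] by auto
      have "lev d s \<le> \<nu>" using nu(4)[OF d01] Fd by simp
      moreover have "\<nu> \<le> lev d s" using Iu(7)[OF ls sc hD] unfolding \<nu>_def .
      ultimately show ?thesis unfolding \<nu>_def by simp
    qed
    have P1: "\<exists>S\<subseteq>Pp. D \<union> substC n d C \<union> {Le (gq n e) (lconst 0), Le (lconst 0) (gq n e)} = \<Union>S"
    proof (rule exI[of _ "S \<union> {substC n d C, {Le (gq n e) (lconst 0), Le (lconst 0) (gq n e)}}"], intro conjI)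
      show "S \<union> {substC n d C, {Le (gq n e) (lconst 0), Le (lconst 0) (gq n e)}} \<subseteq> Pp"
        using S(1) Pp_substC[OF B(5) Iu(4)] Pp_g[OF B(5)] by blast
      show "D \<union> substC n d C \<union> {Le (gq n e) (lconst 0), Le (lconst 0) (gq n e)} = \<Union>(S \<union> {substC n d C, {Le (gq n e) (lconst 0), Le (lconst 0) (gq n e)}})"
        using S(2) by blast
    qed
    have h1: "holdsC r (substC n d C)" using B(1) holdsC_substC[OF l] by simp
    have h2: "holdsC r {Le (gq n e) (lconst 0), Le (lconst 0) (gq n e)}" using a by simp
    show ?thesis unfolding Qres_def res fst_conv snd_conv
    proof (intro conjI)
      show "holdsC r (D \<union> substC n d C \<union> {Le (gq n e) (lconst 0), Le (lconst 0) (gq n e)})" using Iu(1) h1 h2 by simp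
      show "finite (D \<union> substC n d C \<union> {Le (gq n e) (lconst 0), Le (lconst 0) (gq n e)})" using Iu(2) B(2) by (simp add: finite_substC)
      show "range_c n \<subseteq> D \<union> substC n d C \<union> {Le (gq n e) (lconst 0), Le (lconst 0) (gq n e)}" using rsub by blast
      show "\<forall>s. length s = n \<longrightarrow> holdsC s (D \<union> substC n d C \<union> {Le (gq n e) (lconst 0), Le (lconst 0) (gq n e)}) \<longrightarrow> lev d s = sem (Nu T) s"
        using corr by blast
      show "\<exists>S\<subseteq>Pp. D \<union> substC n d C \<union> {Le (gq n e) (lconst 0), Le (lconst 0) (gq n e)} = \<Union>S" using P1 .
      show "d \<in> Lp" using Iu(4) .
    qed
  qed
qed

lemma loopA_nu: "r \<in> cube n \<Longrightarrow> inv_nu r D d \<Longrightarrow> Some res \<in> loop_nu k n T r D d \<Longrightarrow> Qres (Nu T) r res"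
proof (induction k arbitrary: D d)
  case 0 then show ?case by simp
next
  case (Suc k)
  obtain C e x where h: "Some (C, e) \<in> alg k (Suc n) T (r @ [lev d r])" and x: "x \<in> fp_check n r D d C e"
    and alt: "x = Inl res \<or> (\<exists>N a. x = Inr N \<and> a \<in> lower n C \<and> (\<forall>a'\<in>lower n C. lev a' r \<le> lev a r) \<and>
       Some res \<in> loop_nu k n T r (D \<union> substC n d C \<union> {N} \<union> {Le a' a | a'. a' \<in> lower n C}) (subst n a e))"
    using loop_nu_Some[OF Suc.prems(3)] by blast
  from alt show ?case
  proof
    assume "x = Inl res"
    then show ?thesis using ret_nu[OF Suc.prems(1,2) h] x by simp
  next
    assume "\<exists>N a. x = Inr N \<and> a \<in> lower n C \<and> (\<forall>a'\<in>lower n C. lev a' r \<le> lev a r) \<and>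
       Some res \<in> loop_nu k n T r (D \<union> substC n d C \<union> {N} \<union> {Le a' a | a'. a' \<in> lower n C}) (subst n a e)"
    then obtain N a where xN: "x = Inr N" and a: "a \<in> lower n C" and amax: "\<forall>a'\<in>lower n C. lev a' r \<le> lev a r"
      and hr: "Some res \<in> loop_nu k n T r (D \<union> substC n d C \<union> {N} \<union> {Le a' a | a'. a' \<in> lower n C}) (subst n a e)"
      by blast
    have "inv_nu r (D \<union> substC n d C \<union> {N} \<union> {Le a' a | a'. a' \<in> lower n C}) (subst n a e)"
      using step_nu[OF Suc.prems(1,2) h _ a amax] x xN by blast
    then show ?thesis using Suc.IH[OF Suc.prems(1) _ hr] by blast
  qed
qed

definition Mn :: "real list \<Rightarrow> lin \<Rightarrow> nat" where
  "Mn r d = card {C \<in> fst ` R. \<exists>y. y \<le> lev d r \<and> holdsC (r @ [y]) C}"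

lemma Mn_le: "Mn r d \<le> card (fst ` R)"
  unfolding Mn_def using finR by (intro card_mono) auto

lemma Mn_dec:
  assumes lt: "lev d' r < lev d r" and CR: "(C, e) \<in> R" and hC: "holdsC (r @ [lev d r]) C"
    and nh: "\<forall>y. y \<le> lev d' r \<longrightarrow> \<not> holdsC (r @ [y]) C"
  shows "Mn r d' < Mn r d"
proof -
  let ?S = "{C \<in> fst ` R. \<exists>y. y \<le> lev d r \<and> holdsC (r @ [y]) C}"
  let ?S' = "{C \<in> fst ` R. \<exists>y. y \<le> lev d' r \<and> holdsC (r @ [y]) C}"
  have fin: "finite ?S" using finR by simp
  have sub: "?S' \<subseteq> ?S"
  proof
    fix X assume "X \<in> ?S'"
    then obtain y where y: "X \<in> fst ` R" "y \<le> lev d' r" "holdsC (r @ [y]) X" by blast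
    then have "y \<le> lev d r" using lt by simp
    then show "X \<in> ?S" using y by blast
  qed
  have "C \<in> ?S" using CR hC by force
  moreover have "C \<notin> ?S'" using nh by blast
  ultimately have "?S' \<subset> ?S" using sub by blast
  then show ?thesis unfolding Mn_def by (rule psubset_card_mono[OF fin])
qed

lemma loopB_nu:
  assumes K': "\<forall>r'\<in>cube (Suc n). \<forall>k\<ge>K'. None \<notin> alg k (Suc n) T r' \<and> alg k (Suc n) T r' \<noteq> {}"
  shows "r \<in> cube n \<Longrightarrow> inv_nu r D d \<Longrightarrow> K' + 1 + Mn r d \<le> k \<Longrightarrow> None \<notin> loop_nu k n T r D d \<and> loop_nu k n T r D d \<noteq> {}"
proof (induction k arbitrary: D d)
  case 0 then show ?case by simp
next
  case (Suc k)
  have r: "r \<in> cube n" and I: "inv_nu r D d" using Suc.prems by auto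
  have d01: "0 \<le> lev d r" "lev d r \<le> 1" using I unfolding inv_nu_def by auto
  have rin: "r @ [lev d r] \<in> cube (Suc n)" using cube_snoc[OF r d01] .
  have kK: "K' \<le> k" using Suc.prems(3) by simp
  have Bn: "None \<notin> alg k (Suc n) T (r @ [lev d r])" "alg k (Suc n) T (r @ [lev d r]) \<noteq> {}" using K' rin kK by auto
  define \<Phi> where "\<Phi> = (\<lambda>(C, e).
     \<Union>x\<in>fp_check n r D d C e. (case x of
        Inl res \<Rightarrow> {Some res}
      | Inr N \<Rightarrow> (\<Union>a\<in>{a \<in> lower n C. \<forall>a'\<in>lower n C. lev a' r \<le> lev a r}.
           loop_nu k n T r (D \<union> substC n d C \<union> {N} \<union> {Le a' a | a'. a' \<in> lower n C})
             (subst n a e))))"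
  have L: "loop_nu (Suc k) n T r D d = obind (alg k (Suc n) T (r @ [lev d r])) \<Phi>"
    unfolding \<Phi>_def by simp
  have Phi: "None \<notin> \<Phi> (C, e) \<and> \<Phi> (C, e) \<noteq> {}" if h: "Some (C, e) \<in> alg k (Suc n) T (r @ [lev d r])" for C e
  proof -
    have BF: "holdsC (r @ [lev d r]) C" "finite C" "range_c (Suc n) \<subseteq> C" "(C, e) \<in> R"
      using body_facts[OF r d01 h] by auto
    have inner: "None \<notin> loop_nu k n T r (D \<union> substC n d C \<union> {N} \<union> {Le a' a | a'. a' \<in> lower n C}) (subst n a e)
       \<and> loop_nu k n T r (D \<union> substC n d C \<union> {N} \<union> {Le a' a | a'. a' \<in> lower n C}) (subst n a e) \<noteq> {}"
      if IN: "Inr N \<in> fp_check n r D d C e" and a: "a \<in> lower n C" and amax: "\<forall>a'\<in>lower n C. lev a' r \<le> lev a r" for N a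
    proof -
      have st: "inv_nu r (D \<union> substC n d C \<union> {N} \<union> {Le a' a | a'. a' \<in> lower n C}) (subst n a e)
         \<and> lev (subst n a e) r < lev d r \<and> (\<forall>y. y \<le> lev (subst n a e) r \<longrightarrow> \<not> holdsC (r @ [y]) C)"
        using step_nu[OF r I h IN a amax] by blast
      have "Mn r (subst n a e) < Mn r d" using Mn_dec[of "subst n a e" r d C e] st BF by blast
      then have "K' + 1 + Mn r (subst n a e) \<le> k" using Suc.prems(3) by simp
      then show ?thesis using Suc.IH[OF r] st by blast
    qed
    obtain a1 where a1: "a1 \<in> lower n C" using range_low[of n C] BF(3) range_c_Suc by blast
    obtain am where am: "am \<in> lower n C" "\<forall>a'\<in>lower n C. lev a' r \<le> lev am r"
      using finite_max_ex[of "lower n C" "\<lambda>b. lev b r"] finite_lower[OF BF(2)] a1 by blast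
    have nN: "None \<notin> (case x of
        Inl res \<Rightarrow> {Some res}
      | Inr N \<Rightarrow> (\<Union>a\<in>{a \<in> lower n C. \<forall>a'\<in>lower n C. lev a' r \<le> lev a r}.
           loop_nu k n T r (D \<union> substC n d C \<union> {N} \<union> {Le a' a | a'. a' \<in> lower n C})
             (subst n a e)))
      \<and> (case x of
        Inl res \<Rightarrow> {Some res}
      | Inr N \<Rightarrow> (\<Union>a\<in>{a \<in> lower n C. \<forall>a'\<in>lower n C. lev a' r \<le> lev a r}.
           loop_nu k n T r (D \<union> substC n d C \<union> {N} \<union> {Le a' a | a'. a' \<in> lower n C})
             (subst n a e))) \<noteq> {}"
      if x: "x \<in> fp_check n r D d C e" for x
    proof (cases x)
      case (Inl a) then show ?thesis by simp
    next
      case (Inr N)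
      have "None \<notin> (\<Union>a\<in>{a \<in> lower n C. \<forall>a'\<in>lower n C. lev a' r \<le> lev a r}.
           loop_nu k n T r (D \<union> substC n d C \<union> {N} \<union> {Le a' a | a'. a' \<in> lower n C}) (subst n a e))"
        using inner[of N] x Inr by blast
      moreover have "(\<Union>a\<in>{a \<in> lower n C. \<forall>a'\<in>lower n C. lev a' r \<le> lev a r}.
           loop_nu k n T r (D \<union> substC n d C \<union> {N} \<union> {Le a' a | a'. a' \<in> lower n C}) (subst n a e)) \<noteq> {}"
        using inner[of N am] x Inr am by blast
      ultimately show ?thesis using Inr by simp
    qed
    obtain x0 where x0: "x0 \<in> fp_check n r D d C e" using fp_ne by blast
    show ?thesis unfolding \<Phi>_def using nN x0 by (auto simp del: sum.case)
  qed
  have "None \<notin> obind (alg k (Suc n) T (r @ [lev d r])) \<Phi>"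
    using Bn(1) Phi by (auto simp: obind_None)
  moreover have "obind (alg k (Suc n) T (r @ [lev d r])) \<Phi> \<noteq> {}"
  proof (rule obind_ne[OF Bn(2)])
    fix a assume "Some a \<in> alg k (Suc n) T (r @ [lev d r])"
    then show "\<Phi> a \<noteq> {}" using Phi by (cases a) auto
  qed
  ultimately show ?case unfolding L by blast
qed

lemma inv_nu_init: "r \<in> cube n \<Longrightarrow> inv_nu r {} (lconst 1)"
  unfolding inv_nu_def using Lp_1 nu_sem by (auto intro!: exI[of _ "{}"])

lemma good_Nu: "good n (Nu T)"
proof -
  obtain K' where K': "\<forall>r'\<in>cube (Suc n). \<forall>k\<ge>K'. None \<notin> alg k (Suc n) T r' \<and> alg k (Suc n) T r' \<noteq> {}"
    using gd unfolding good_def by blast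
  have Q: "Qres (Nu T) r (C, e)" if r: "r \<in> cube n" and h: "Some (C, e) \<in> alg k n (Nu T) r" for r k C e
  proof -
    obtain k' where k: "k = Suc k'" using alg_Suc_cases h by blast
    have "Some (C, e) \<in> loop_nu k' n T r {} (lconst 1)" using h k by simp
    then show ?thesis using loopA_nu[OF r inv_nu_init[OF r]] by blast
  qed
  have 1: "\<forall>r k C e. r \<in> cube n \<longrightarrow> Some (C, e) \<in> alg k n (Nu T) r \<longrightarrow>
        holdsC r C \<and> finite C \<and> range_c n \<subseteq> C \<and> (\<forall>s. length s = n \<longrightarrow> holdsC s C \<longrightarrow> lev e s = sem (Nu T) s)"
    using Q unfolding Qres_def by fastforce
  have 2: "\<forall>r\<in>cube n. \<forall>k\<ge>K' + card (fst ` R) + 2. None \<notin> alg k n (Nu T) r \<and> alg k n (Nu T) r \<noteq> {}"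
  proof (intro ballI allI impI)
    fix r k assume r: "r \<in> cube n" and k: "K' + card (fst ` R) + 2 \<le> k"
    then obtain k' where k': "k = Suc k'" by (cases k) auto
    have "K' + 1 + Mn r (lconst 1) \<le> k'" using Mn_le[of r "lconst 1"] k k' by simp
    then show "None \<notin> alg k n (Nu T) r \<and> alg k n (Nu T) r \<noteq> {}"
      using loopB_nu[OF K' r inv_nu_init[OF r]] k' by simp
  qed
  have sub: "results n (Nu T) \<subseteq> (\<lambda>(S, l). (\<Union>S, l)) ` (Pow Pp \<times> Lp)"
  proof
    fix x assume "x \<in> results n (Nu T)"
    then obtain r k where r: "r \<in> cube n" and h: "Some x \<in> alg k n (Nu T) r" by (auto simp: results_def)
    obtain C e where x: "x = (C, e)" by (cases x) auto
    have "Qres (Nu T) r (C, e)" using Q r h x by blast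
    then obtain S where "S \<subseteq> Pp" "C = \<Union>S" "e \<in> Lp" unfolding Qres_def by auto
    then show "x \<in> (\<lambda>(S, l). (\<Union>S, l)) ` (Pow Pp \<times> Lp)" unfolding x by force
  qed
  have 3: "finite (results n (Nu T))"
    by (rule finite_subset[OF sub]) (use finite_Pp finite_Lp in simp)
  show ?thesis unfolding good_def using 1 2 3 by blast
qed

end


lemma good_all: "wf_term n t \<Longrightarrow> good n t"
proof (induction t arbitrary: n)
  case (Var i) then show ?case by (simp add: good_Var)
next
  case Zero then show ?case by (simp add: good_Zero)
next
  case One then show ?case by (simp add: good_One)
next
  case (Scal c t) then show ?case by (simp add: good_Scal)
next
  case (Join t1 t2) then show ?case by (simp add: good_Join)
next
  case (Meet t1 t2) then show ?case by (simp add: good_Meet)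
next
  case (Oplus t1 t2) then show ?case by (simp add: good_Oplus)
next
  case (Odot t1 t2) then show ?case by (simp add: good_Odot)
next
  case (Mu t)
  then have "bodyc n t" by (unfold_locales) auto
  then show ?case by (rule bodyc.good_Mu)
next
  case (Nu t)
  then have "bodyc n t" by (unfold_locales) auto
  then show ?case by (rule bodyc.good_Nu)
qed

theorem mainTheorem2:
  fixes n :: nat and t :: mterm
  assumes "wf_term n t"
  shows "(\<forall>r\<in>cube n. \<exists>k. None \<notin> alg k n t r \<and> alg k n t r \<noteq> {})
       \<and> (\<forall>r\<in>cube n. \<forall>k C e. Some (C, e) \<in> alg k n t r \<longrightarrow>
            holdsC r C \<and>
            (\<forall>s. length s = n \<longrightarrow> holdsC s C \<longrightarrow> s \<in> cube n \<and> lev e s = sem t s))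
       \<and> finite (results n t)
       \<and> represents n (results n t) (sem t)"
proof -
  have g: "good n t" using good_all[OF assms] .
  have A: "\<And>r k C e. r \<in> cube n \<Longrightarrow> Some (C, e) \<in> alg k n t r \<Longrightarrow>
        holdsC r C \<and> finite C \<and> range_c n \<subseteq> C \<and> (\<forall>s. length s = n \<longrightarrow> holdsC s C \<longrightarrow> lev e s = sem t s)"
    using g unfolding good_def by blast
  obtain K where K: "\<forall>r\<in>cube n. \<forall>k\<ge>K. None \<notin> alg k n t r \<and> alg k n t r \<noteq> {}"
    using g unfolding good_def by blast
  have fin: "finite (results n t)" using g unfolding good_def by blast
  have 1: "\<forall>r\<in>cube n. \<exists>k. None \<notin> alg k n t r \<and> alg k n t r \<noteq> {}" using K by blast
  have 2: "\<forall>r\<in>cube n. \<forall>k C e. Some (C, e) \<in> alg k n t r \<longrightarrow>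
            holdsC r C \<and> (\<forall>s. length s = n \<longrightarrow> holdsC s C \<longrightarrow> s \<in> cube n \<and> lev e s = sem t s)"
  proof (intro ballI allI impI conjI)
    fix r k C e assume r: "r \<in> cube n" and h: "Some (C, e) \<in> alg k n t r"
    show "holdsC r C" using A[OF r h] by blast
    fix s assume ls: "length s = n" and hs: "holdsC s C"
    show "s \<in> cube n" using A[OF r h] holdsC_range_c[OF ls] holdsC_mono[OF hs] by blast
    show "lev e s = sem t s" using A[OF r h] ls hs by blast
  qed
  have 4: "represents n (results n t) (sem t)"
    unfolding represents_def
  proof (intro conjI ballI)
    fix r assume r: "r \<in> cube n"
    have "None \<notin> alg K n t r" "alg K n t r \<noteq> {}" using K r by auto
    then obtain x where x: "Some x \<in> alg K n t r" by (metis ex_in_conv not_None_eq)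
    obtain C e where xe: "x = (C, e)" by (cases x) auto
    have "(C, e) \<in> results n t" using r x xe unfolding results_def by blast
    moreover have "holdsC r C" using A[OF r] x xe by blast
    ultimately show "\<exists>(C, e)\<in>results n t. holdsC r C" by blast
  next
    fix p assume p: "p \<in> results n t"
    obtain C e where pe: "p = (C, e)" by (cases p) auto
    obtain r0 k where r0: "r0 \<in> cube n" and h: "Some (C, e) \<in> alg k n t r0"
      using p pe unfolding results_def by blast
    show "case p of (C, e) \<Rightarrow> \<forall>r\<in>cube n. holdsC r C \<longrightarrow> lev e r = sem t r"
      unfolding pe using A[OF r0 h] by (auto simp: cube_def)
  qed
  show ?thesis using 1 2 fin 4 by blast
qed


end
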